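(* Let $(k,q)$ be a semiprimitive pair with $q=p^m$, $m$ even, and put $n=\frac{q-1}{k}$. Let $\sigma$ be as defined in the context. Then $$\mathrm{Spec}(\Gamma(k,q))=\{[n]^1,[\lambda_1]^n,[\lambda_2]^{(k-1)n}\},\qquad \mathrm{Spec}(\bar\Gamma(k,q))=\{[(k-1)n]^1,[(k-1)\lambda_2]^n,[-1-\lambda_2]^{(k-1)n}\},$$ where $$\lambda_1=\frac{\sigma(k-1)p^{m/2}-1}{k},\qquad \lambda_2=-\frac{\sigma p^{m/2}+1}{k},$$ and the three values $n,\lambda_1,\lambda_2$ are pairwise distinct.
   Context: Let $p$ be prime, $q=p^m$, $k\mid q-1$, $R_k=\{x^k:x\in\mathbb F_q^*\}$. The generalized Paley graph $\Gamma(k,q)$ is the Cayley graph with vertex set $\mathbb F_q$ where $u\to v$ is an edge iff $v-u\in R_k$; $\bar\Gamma(k,q)$ is the Cayley graph on $\mathbb F_q$ with connection set $\mathbb F_q^*\setminus R_k$. Spectrum = multiset of adjacency eigenvalues, written $\{[\lambda]^{\text{mult}}\}$. A pair $(k,q)$ with $q=p^m$ and $k\mid q-1$ is called a semiprimitive pair if either $k=2$ and $q\equiv1\pmod 4$, or $k>2$, $k\mid p^t+1$ for some $t\mid\frac m2$, and $k\neq p^{m/2}+1$. For a semiprimitive pair with $m$ even, let $t$ be the least positive integer $j$ with $k\mid p^j+1$, put $s=\frac{m}{2t}$, and $\sigma=(-1)^{s+1}$. *)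

theory Defs
  imports "HOL-Analysis.Analysis" "HOL-Computational_Algebra.Polynomial"
begin

definition kth_powers :: "nat \<Rightarrow> 'a::field set" where
  "kth_powers k = {x ^ k | x. x \<noteq> 0}"

text \<open>Adjacency matrix of the generalized Paley graph Gamma(k,q): Cayley (di)graph
  on the finite field with connection set R_k; u -> v iff v - u in R_k.\<close>
definition paley_adj :: "nat \<Rightarrow> ((complex, 'a::{finite,field}) vec, 'a) vec" where
  "paley_adj k = (\<chi> u v. if v - u \<in> kth_powers k then 1 else 0)"

definition paley_comp_adj :: "nat \<Rightarrow> ((complex, 'a::{finite,field}) vec, 'a) vec" where
  "paley_comp_adj k = (\<chi> u v. if v - u \<noteq> 0 \<and> v - u \<notin> kth_powers k then 1 else 0)"

definition char_poly_mat :: "complex ^ 'n::finite ^ 'n \<Rightarrow> complex poly" where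
  "char_poly_mat A = det (\<chi> i. \<chi> j. (if i = j then [:0, 1:] else 0) - [:A $ i $ j:])"

definition adj_spectrum :: "complex ^ 'n::finite ^ 'n \<Rightarrow> complex multiset" where
  "adj_spectrum A = proots (char_poly_mat A)"

definition semiprimitive_pair :: "nat \<Rightarrow> nat \<Rightarrow> nat \<Rightarrow> bool" where
  "semiprimitive_pair p m k \<longleftrightarrow>
     k dvd p ^ m - 1 \<and>
     ((k = 2 \<and> p ^ m mod 4 = 1) \<or>
      (k > 2 \<and> even m \<and> (\<exists>t. t dvd m div 2 \<and> k dvd p ^ t + 1) \<and> k \<noteq> p ^ (m div 2) + 1))"

definition sp_t :: "nat \<Rightarrow> nat \<Rightarrow> nat" where
  "sp_t p k = (LEAST j. 0 < j \<and> k dvd p ^ j + 1)"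

definition sp_sigma :: "nat \<Rightarrow> nat \<Rightarrow> nat \<Rightarrow> int" where
  "sp_sigma p m k = (-1) ^ (m div (2 * sp_t p k) + 1)"

end

theory Submission
  imports Defs "HOL-Number_Theory.Residues" "HOL-Computational_Algebra.Primes"
begin

lemma card_pow_eq_le:
  fixes c :: "'a::field"
  assumes "d > 0"
  shows "finite {x. x^d = c}" "card {x. x^d = c} \<le> d"
proof -
  let ?P = "Polynomial.monom 1 d + [:-c:]"
  have deg: "degree ?P = d" using assms by (subst degree_add_eq_left) (auto simp: degree_monom_eq)
  have P0: "?P \<noteq> 0" using deg assms by auto
  have eq: "{x. x^d = c} = {x. poly ?P x = 0}" by (auto simp: poly_monom)
  show "finite {x. x^d = c}" using poly_roots_finite[OF P0] eq by simp
  show "card {x. x^d = c} \<le> d" using card_poly_roots_bound[OF P0] eq deg by simp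
qed

lemma card_le_fibres:
  assumes "finite A" "\<And>y. card {x\<in>A. f x = y} \<le> b"
  shows "card A \<le> b * card (f ` A)"
proof -
  have "A = (\<Union>y\<in>f ` A. {x\<in>A. f x = y})" by auto
  hence "card A \<le> (\<Sum>y\<in>f ` A. card {x\<in>A. f x = y})"
    by (metis card_UN_le assms(1) finite_imageI)
  also have "\<dots> \<le> (\<Sum>y\<in>f ` A. b)" by (intro sum_mono assms(2))
  finally show ?thesis by (simp add: mult.commute)
qed

locale ffield =
  fixes p m :: nat and TY :: "'a::{field,finite} itself"
  assumes p_prime: "prime p" and card_a: "CARD('a) = p ^ m"
begin

abbreviation "q \<equiv> p ^ m"

lemma p_gt1: "p > 1" using p_prime prime_gt_1_nat by blast

lemma m_pos: "m > 0"
proof (rule ccontr)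
  assume "\<not> m > 0"
  hence "CARD('a) = 1" using card_a by simp
  moreover have "card {0::'a, 1} = 2" by simp
  moreover have "card {0::'a, 1} \<le> CARD('a)" by (rule card_mono) auto
  ultimately show False by simp
qed

lemma q_gt1: "q > 1" using one_less_power[OF p_gt1 m_pos] .

lemma char_eq: "CHAR('a) = p"
proof -
  have "CHAR('a) dvd p ^ m" using CHAR_dvd_CARD[where 'a='a] card_a by simp
  moreover have "CHAR('a) > 0" by (rule finite_imp_CHAR_pos) simp
  hence "prime CHAR('a)" by (rule prime_CHAR_semidom)
  ultimately show ?thesis
    using p_prime prime_dvd_power primes_dvd_imp_eq by blast
qed

lemma of_nat_p: "of_nat p = (0::'a)"
  using char_eq of_nat_CHAR[where 'a='a] by simp

lemma frob_add: "((x::'a) + y) ^ (p ^ j) = x ^ (p^j) + y ^ (p^j)"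
  by (rule freshmans_dream') (auto simp: char_eq p_prime)

lemma frob_sum: "(sum (f :: 'b \<Rightarrow> 'a) A) ^ (p ^ j) = sum (\<lambda>i. f i ^ (p^j)) A"
  by (rule freshmans_dream_sum') (auto simp: char_eq p_prime)

lemma frob_diff: "((x::'a) - y) ^ (p ^ j) = x ^ (p^j) - y ^ (p^j)"
proof -
  have "((x - y) + y) ^ (p^j) = (x - y) ^ (p^j) + y ^ (p^j)" by (rule frob_add)
  thus ?thesis by (simp add: algebra_simps)
qed

lemma pow_q: "(x::'a) ^ q = x"
proof (cases "x = 0")
  case False
  have "x * (\<Prod>y\<in>UNIV-{0}. x * y) = x * x ^ (card (UNIV :: 'a set) - 1) * \<Prod>(UNIV-{0})"
    by (simp add: prod.distrib mult_ac)
  also have "x * x ^ (card (UNIV :: 'a set) - 1) = x ^ Suc (card (UNIV :: 'a set) - 1)"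
    by (subst power_Suc) auto
  also have "Suc (card (UNIV :: 'a set) - 1) = card (UNIV :: 'a set)"
    using finite_UNIV_card_ge_0[where ?'a = 'a] by simp
  also have "(\<Prod>y\<in>UNIV-{0}. x * y) = (\<Prod>y\<in>UNIV-{0}. y)"
    by (rule prod.reindex_bij_witness[of _ "\<lambda>y. y / x" "\<lambda>y. x * y"]) (use False in auto)
  finally show ?thesis
    using card_a by simp
qed (use m_pos p_gt1 in auto)

lemma pow_q1: "(x::'a) \<noteq> 0 \<Longrightarrow> x ^ (q - 1) = 1"
proof -
  assume "x \<noteq> 0"
  have "q = Suc (q - 1)" using q_gt1 by simp
  hence "x * x ^ (q-1) = x ^ q" by (metis power_Suc)
  thus ?thesis using pow_q \<open>x \<noteq> 0\<close> by (metis mult_cancel_left2)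
qed

lemma card_roots1:
  assumes "d dvd q - 1"
  shows "card {x::'a. x^d = 1} = d"
proof -
  have dpos: "d > 0" proof (rule ccontr)
    assume "\<not> d > 0" hence "q - 1 = 0" using assms by simp
    thus False using q_gt1 by simp
  qed
  obtain e where e: "q - 1 = d * e" using assms by blast
  have epos: "e > 0" using e q_gt1 by (metis mult_0_right neq0_conv zero_less_diff)
  let ?U = "{x::'a. x^d = 1}"
  have le: "card ?U \<le> d" using card_pow_eq_le[OF dpos, of 1] by simp
  have fin: "finite ?U" using card_pow_eq_le[OF dpos, of 1] by simp
  let ?A = "UNIV - {0::'a}"
  have img: "(\<lambda>x. x ^ e) ` ?A \<subseteq> ?U"
  proof
    fix y assume "y \<in> (\<lambda>x. x ^ e) ` ?A"
    then obtain x where "x \<noteq> 0" "y = x ^ e" by auto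
    hence "y ^ d = x ^ (d * e)" by (simp add: power_mult[symmetric] mult.commute)
    hence "y ^ d = x ^ (q - 1)" using e by simp
    thus "y \<in> ?U" using pow_q1 \<open>x \<noteq> 0\<close> by simp
  qed
  have "card ?A \<le> e * card ((\<lambda>x. x ^ e) ` ?A)"
  proof (rule card_le_fibres)
    fix y
    have "{x\<in>?A. x ^ e = y} \<subseteq> {x. x^e = y}" by auto
    thus "card {x\<in>?A. x ^ e = y} \<le> e"
      using card_pow_eq_le[OF epos, of y] by (meson card_mono order_trans)
  qed simp
  also have "\<dots> \<le> e * card ?U" using img fin by (simp add: card_mono)
  finally have "d * e \<le> e * card ?U" using card_a e by (simp add: card_Diff_singleton)
  hence "d \<le> card ?U" using epos by (simp add: mult.commute)
  with le show ?thesis by simp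
qed

definition E :: "nat \<Rightarrow> 'a set" where "E Q = {x. x ^ Q = x}"

lemma card_E:
  assumes "Q - 1 dvd q - 1" "Q \<ge> 2"
  shows "card (E Q) = Q"
proof -
  have "E Q = insert 0 {x. x^(Q-1) = 1}"
  proof -
    have "x ^ Q = x \<longleftrightarrow> x = 0 \<or> x ^ (Q-1) = 1" for x :: 'a
    proof -
      have "Q = Suc (Q - 1)" using assms(2) by simp
      hence "x ^ Q = x * x ^ (Q - 1)" by (metis power_Suc)
      thus ?thesis by auto
    qed
    thus ?thesis unfolding E_def by auto
  qed
  moreover have "0 \<notin> {x::'a. x^(Q-1) = 1}" using assms(2) by (simp add: power_0_left)
  moreover have "finite {x::'a. x^(Q-1) = 1}" by simp
  ultimately show ?thesis using card_roots1[OF assms(1)] assms(2) by simp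
qed

lemma kth_powers_eq:
  assumes "k dvd q - 1"
  shows "kth_powers k = {x::'a. x ^ ((q-1) div k) = 1}" 
    and "card (kth_powers k :: 'a set) = (q-1) div k"
proof -
  have kpos: "k > 0" proof (rule ccontr)
    assume "\<not> k > 0" hence "q - 1 = 0" using assms by simp
    thus False using q_gt1 by simp
  qed
  let ?U = "{x::'a. x ^ ((q-1) div k) = 1}"
  obtain r where r: "q - 1 = k * r" using assms by blast
  have rdef: "(q-1) div k = r" using r kpos by simp
  have dv: "(q-1) div k dvd q - 1" unfolding rdef r by simp
  have cU: "card ?U = (q-1) div k" by (rule card_roots1[OF dv])
  have sub: "(kth_powers k :: 'a set) \<subseteq> ?U"
  proof
    fix y :: 'a assume "y \<in> kth_powers k"
    then obtain x :: 'a where "x \<noteq> 0" "y = x ^ k" unfolding kth_powers_def by auto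
    hence "y ^ ((q-1) div k) = x ^ (k * r)" unfolding rdef by (simp add: power_mult)
    hence "y ^ ((q-1) div k) = x ^ (q-1)" using r by metis
    thus "y \<in> ?U" using pow_q1 \<open>x \<noteq> 0\<close> by simp
  qed
  let ?A = "UNIV - {0::'a}"
  have kp: "(kth_powers k :: 'a set) = (\<lambda>x. x ^ k) ` ?A" unfolding kth_powers_def by auto
  have "card ?A \<le> k * card ((\<lambda>x. x ^ k) ` ?A)"
  proof (rule card_le_fibres)
    fix y
    have "{x\<in>?A. x ^ k = y} \<subseteq> {x. x^k = y}" by auto
    thus "card {x\<in>?A. x ^ k = y} \<le> k"
      using card_pow_eq_le[OF kpos, of y] by (meson card_mono order_trans)
  qed simp
  hence "q - 1 \<le> k * card (kth_powers k :: 'a set)" using card_a kp by (simp add: card_Diff_singleton)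
  hence ge: "(q-1) div k \<le> card (kth_powers k :: 'a set)" using kpos
    unfolding rdef r by (simp add: kpos)
  have finU: "finite ?U" by simp
  have "card (kth_powers k :: 'a set) = card ?U"
    using ge cU card_mono[OF finU sub] by linarith
  hence keq: "(kth_powers k :: 'a set) = ?U" by (rule card_subset_eq[OF finU sub])
  show "(kth_powers k :: 'a set) = ?U" by (rule keq)
  show "card (kth_powers k :: 'a set) = (q-1) div k" using cU keq by simp
qed

end


definition addchar :: "'a::field set \<Rightarrow> ('a \<Rightarrow> complex) \<Rightarrow> bool" where
  "addchar K \<psi> \<longleftrightarrow> (\<forall>x\<in>K. \<forall>y\<in>K. \<psi> (x + y) = \<psi> x * \<psi> y)"

lemma sub1_dvd_pow_sub1: "(x::nat) - 1 dvd x ^ r - 1"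
proof (cases "x = 0")
  case True thus ?thesis by (cases r) auto
next
  case False
  show ?thesis
  proof (induction r)
    case (Suc r)
    have "x ^ r \<ge> 1" using False by simp
    hence "x ^ Suc r - 1 = x * (x ^ r - 1) + (x - 1)" using False
      by (simp add: algebra_simps diff_mult_distrib2)
    thus ?case using Suc by (simp add: dvd_add)
  qed simp
qed

lemma pow_sub1_dvd: "j dvd m \<Longrightarrow> (x::nat) ^ j - 1 dvd x ^ m - 1"
  using sub1_dvd_pow_sub1[of "x^j"] by (auto simp: power_mult elim!: dvdE)

lemma card_pow_eq_self_le:
  assumes "d > 1"
  shows "card {x::'a::field. x^d = x} \<le> d"
proof -
  let ?P = "Polynomial.monom (1::'a) d + [:0, -1:]"
  have deg: "degree ?P = d" using assms by (subst degree_add_eq_left) (auto simp: degree_monom_eq)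
  have P0: "?P \<noteq> 0" using deg assms by auto
  have eq: "{x::'a. x^d = x} = {x. poly ?P x = 0}" by (auto simp: poly_monom)
  show ?thesis using card_poly_roots_bound[OF P0] eq deg by simp
qed

lemma char_sum_zero:
  assumes "finite K" "addchar K \<psi>" "x0 \<in> K" "\<psi> x0 \<noteq> 1"
    and "\<And>x y. x \<in> K \<Longrightarrow> y \<in> K \<Longrightarrow> x + y \<in> K"
    and "\<And>x y. x \<in> K \<Longrightarrow> y \<in> K \<Longrightarrow> x - y \<in> K"
  shows "(\<Sum>x\<in>K. \<psi> x) = 0"
proof -
  have "(\<Sum>x\<in>K. \<psi> x) = (\<Sum>x\<in>K. \<psi> (x + x0))"
    by (rule sum.reindex_bij_witness[of _ "\<lambda>y. y + x0" "\<lambda>y. y - x0"])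
       (use assms(3,5,6) in auto)
  also have "\<dots> = (\<Sum>x\<in>K. \<psi> x * \<psi> x0)"
    using assms(2,3) unfolding addchar_def by (intro sum.cong) auto
  also have "\<dots> = (\<Sum>x\<in>K. \<psi> x) * \<psi> x0" by (simp add: sum_distrib_right)
  finally have "(\<Sum>x\<in>K. \<psi> x) * (1 - \<psi> x0) = 0" by (simp add: algebra_simps)
  thus ?thesis using assms(4) by simp
qed

context ffield
begin

lemma E_add: "x \<in> E (p^j) \<Longrightarrow> y \<in> E (p^j) \<Longrightarrow> x + y \<in> E (p^j)"
  unfolding E_def by (simp add: frob_add)
lemma E_diff: "x \<in> E (p^j) \<Longrightarrow> y \<in> E (p^j) \<Longrightarrow> x - y \<in> E (p^j)"
  unfolding E_def by (simp add: frob_diff)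
lemma E_mult: "x \<in> E Q \<Longrightarrow> y \<in> E Q \<Longrightarrow> x * y \<in> E Q"
  unfolding E_def by (simp add: power_mult_distrib)
lemma E_inverse: "x \<in> E Q \<Longrightarrow> inverse x \<in> E Q"
  unfolding E_def by (simp add: power_inverse)
lemma E_divide: "x \<in> E Q \<Longrightarrow> y \<in> E Q \<Longrightarrow> x / y \<in> E Q"
  unfolding E_def by (simp add: power_divide)
lemma E_0: "Q > 0 \<Longrightarrow> 0 \<in> E Q" unfolding E_def by simp
lemma E_1: "1 \<in> E Q" unfolding E_def by simp

definition Tr0 :: "nat \<Rightarrow> 'a \<Rightarrow> 'a" where "Tr0 j x = (\<Sum>i<j. x ^ (p ^ i))"

lemma Tr0_add: "Tr0 j (x + y) = Tr0 j x + Tr0 j y"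
  unfolding Tr0_def by (simp add: frob_add sum.distrib)

lemma Tr0_pow: assumes "x \<in> E (p^j)" shows "Tr0 j x ^ p = Tr0 j x"
proof -
  have "Tr0 j x ^ p = Tr0 j x ^ (p ^ 1)" by simp
  also have "\<dots> = (\<Sum>i<j. (x ^ (p ^ i)) ^ (p ^ 1))" unfolding Tr0_def by (rule frob_sum)
  also have "\<dots> = (\<Sum>i<j. x ^ (p ^ Suc i))" by (simp add: power_mult[symmetric] mult.commute)
  also have "\<dots> = (\<Sum>i<Suc j. x ^ (p ^ i)) - x ^ (p ^ 0)"
    by (subst sum.lessThan_Suc_shift) simp
  also have "\<dots> = Tr0 j x + x ^ (p ^ j) - x" unfolding Tr0_def by simp
  also have "\<dots> = Tr0 j x" using assms unfolding E_def by simp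
  finally show ?thesis .
qed

definition PF :: "'a set" where "PF = {y. y ^ p = y}"

lemma of_nat_pow_p: "(of_nat r :: 'a) ^ p = of_nat r"
proof (induction r)
  case 0 thus ?case using p_gt1 by simp
next
  case (Suc r)
  have "(of_nat r + 1 :: 'a) ^ (p^1) = of_nat r ^ (p^1) + 1 ^ (p^1)" by (rule frob_add)
  thus ?case using Suc by (simp add: add.commute)
qed

lemma of_nat_inj_p: "a < p \<Longrightarrow> b < p \<Longrightarrow> (of_nat a :: 'a) = of_nat b \<Longrightarrow> a = b"
  using of_nat_eq_iff_cong_CHAR[where 'a='a, of a b] char_eq
  by (simp add: cong_def)

lemma PF_eq: "PF = (of_nat ` {..<p} :: 'a set)"
proof -
  have sub: "(of_nat ` {..<p} :: 'a set) \<subseteq> PF" unfolding PF_def using of_nat_pow_p by auto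
  have c1: "card (of_nat ` {..<p} :: 'a set) = p"
    using of_nat_inj_p by (subst card_image) (auto simp: inj_on_def)
  have c2: "card PF \<le> p" unfolding PF_def using card_pow_eq_self_le[of p] p_gt1 by simp
  have "finite PF" by simp
  have "(of_nat ` {..<p} :: 'a set) = PF"
    by (rule card_seteq[OF \<open>finite PF\<close> sub]) (simp add: c1 c2)
  thus ?thesis by simp
qed

definition rep :: "'a \<Rightarrow> nat" where "rep y = (SOME r. r < p \<and> of_nat r = y)"

lemma rep: assumes "y \<in> PF" shows "rep y < p" "of_nat (rep y) = y"
proof -
  have "\<exists>r. r < p \<and> of_nat r = y" using assms PF_eq by auto
  hence "rep y < p \<and> of_nat (rep y) = y" unfolding rep_def by (rule someI_ex)
  thus "rep y < p" "of_nat (rep y) = y" by auto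
qed

definition zeta :: "nat \<Rightarrow> complex" where
  "zeta r = exp (2 * of_real pi * \<i> * of_nat r / of_nat p)"

lemma zeta_add: "zeta (a + b) = zeta a * zeta b"
  unfolding zeta_def by (simp add: exp_add[symmetric] add_divide_distrib distrib_left distrib_right)

lemma zeta_mod: "a mod p = b mod p \<Longrightarrow> zeta a = zeta b"
  unfolding zeta_def using complex_root_unity_eq[of p a b] p_gt1 by simp

lemma zeta_ne1: "0 < a \<Longrightarrow> a < p \<Longrightarrow> zeta a \<noteq> 1"
  unfolding zeta_def using complex_root_unity_eq_1[of p a] p_gt1
  by (simp add: nat_dvd_not_less)

lemma rep_add: assumes "a \<in> PF" "b \<in> PF" "a + b \<in> PF"
  shows "zeta (rep (a + b)) = zeta (rep a) * zeta (rep b)"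
proof -
  have "(of_nat (rep a + rep b) :: 'a) = of_nat (rep (a + b))" using rep(2) assms by simp
  hence "[rep a + rep b = rep (a + b)] (mod CHAR('a))"
    by (subst (asm) of_nat_eq_iff_cong_CHAR)
  hence "[rep a + rep b = rep (a + b)] (mod p)" using char_eq by simp
  hence "zeta (rep a + rep b) = zeta (rep (a + b))" by (intro zeta_mod) (simp add: cong_def)
  thus ?thesis by (simp add: zeta_add)
qed

lemma Tr0_nonzero:
  assumes "j > 0" "j dvd m"
  shows "\<exists>x\<in>E (p^j). Tr0 j x \<noteq> 0"
proof (rule ccontr)
  assume "\<not> ?thesis"
  hence all: "\<forall>x\<in>E (p^j). Tr0 j x = 0" by blast
  let ?P = "\<Sum>i<j. Polynomial.monom (1::'a) (p ^ i)"
  have ev: "poly ?P x = Tr0 j x" for x unfolding Tr0_def by (simp add: poly_sum poly_monom)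
  have dg: "degree ?P \<le> p ^ (j - 1)"
  proof (rule degree_sum_le)
    fix i assume "i \<in> {..<j}"
    hence "p ^ i \<le> p ^ (j - 1)" using p_gt1 by (intro power_increasing) auto
    thus "degree (Polynomial.monom (1::'a) (p ^ i)) \<le> p ^ (j - 1)" by (simp add: degree_monom_eq)
  qed simp
  have "Polynomial.coeff ?P (p ^ (j - 1)) = (\<Sum>i<j. if p ^ i = p ^ (j-1) then 1 else 0)"
    by (simp add: Polynomial.coeff_sum Polynomial.coeff_monom)
  also have "\<dots> = (\<Sum>i\<in>{j-1}. 1)"
  proof -
    have "\<And>i. p ^ i = p ^ (j-1) \<longleftrightarrow> i = j - 1" using p_gt1 by (simp add: power_inject_exp)
    hence "(\<Sum>i<j. if p ^ i = p ^ (j-1) then 1 else (0::'a)) = (\<Sum>i<j. if i = j - 1 then 1 else 0)"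
      by simp
    also have "\<dots> = (\<Sum>i\<in>{j-1}. 1)" using assms by (simp add: sum.delta)
    finally show ?thesis .
  qed
  finally have "Polynomial.coeff ?P (p ^ (j - 1)) = 1" by simp
  hence P0: "?P \<noteq> 0" by auto
  have "E (p^j) \<subseteq> {x. poly ?P x = 0}" using all ev by auto
  hence "card (E (p^j)) \<le> card {x. poly ?P x = 0}" by (intro card_mono) simp_all
  also have "\<dots> \<le> p ^ (j - 1)" using card_poly_roots_bound[OF P0] dg by simp
  finally have "card (E (p^j)) \<le> p ^ (j-1)" .
  moreover have "card (E (p^j)) = p ^ j"
  proof (rule card_E)
    show "p ^ j - 1 dvd q - 1" using pow_sub1_dvd[OF assms(2)] .
    show "2 \<le> p ^ j" using p_gt1 assms(1)
      by (metis Suc_1 Suc_leI one_less_power)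
  qed
  moreover have "p ^ (j-1) < p ^ j" using p_gt1 assms by (intro power_strict_increasing) auto
  ultimately show False by simp
qed

end


lemma sum_fibres:
  assumes "finite A" "finite B" "g ` A \<subseteq> B"
  shows "(\<Sum>a\<in>A. f (g a)) = (\<Sum>b\<in>B. of_nat (card {a\<in>A. g a = b}) * (f b :: complex))"
proof -
  have "(\<Sum>a\<in>A. f (g a)) = (\<Sum>b\<in>B. \<Sum>a\<in>{x. x \<in> A \<and> g x = b}. f (g a))"
    using sum.group[OF assms, of "\<lambda>a. f (g a)"] by simp
  also have "\<dots> = (\<Sum>b\<in>B. of_nat (card {a\<in>A. g a = b}) * f b)"
    by (intro sum.cong refl) simp
  finally show ?thesis .
qed

lemma card_fibres_sum:
  assumes "finite A" "finite B" "g ` A \<subseteq> B"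
  shows "(\<Sum>b\<in>B. card {a\<in>A. g a = b}) = card A"
proof -
  have "(\<Sum>b\<in>B. \<Sum>a\<in>{x. x \<in> A \<and> g x = b}. (1::nat)) = (\<Sum>a\<in>A. 1)"
    by (rule sum.group[OF assms])
  thus ?thesis by simp
qed

lemma all_eq_2:
  assumes "finite B" "\<And>b. b \<in> B \<Longrightarrow> h b \<le> (2::nat)" "(\<Sum>b\<in>B. h b) = 2 * card B"
  shows "\<And>b. b \<in> B \<Longrightarrow> h b = 2"
proof (rule ccontr)
  fix b assume b: "b \<in> B" "h b \<noteq> 2"
  hence "h b < 2" using assms(2) by (simp add: le_neq_implies_less)
  hence "(\<Sum>b\<in>B. h b) < (\<Sum>b\<in>B. 2)"
    using assms(1,2) b(1) by (intro sum_strict_mono_ex1) auto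
  thus False using assms(3) by simp
qed

lemma root2:
  fixes y u v :: "'a::field"
  assumes "y * y - (u + v) * y + u * v = 0"
  shows "y = u \<or> y = v"
proof -
  have "(y - u) * (y - v) = 0" using assms by (simp add: algebra_simps)
  thus ?thesis by simp
qed

definition goodchar :: "'a::field set \<Rightarrow> ('a \<Rightarrow> complex) \<Rightarrow> bool" where
  "goodchar K \<psi> \<longleftrightarrow> addchar K \<psi> \<and> \<psi> 0 = 1 \<and> (\<Sum>x\<in>K. \<psi> x) = 0"

context ffield
begin

lemma E_finite: "finite (E Q)" by simp

lemma base_char:
  assumes "j > 0" "j dvd m"
  shows "\<exists>\<psi>. goodchar (E (p^j)) \<psi>"
proof -
  define \<psi> where "\<psi> x = zeta (rep (Tr0 j x))" for x
  have inPF: "Tr0 j x \<in> PF" if "x \<in> E (p^j)" for x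
    using Tr0_pow[OF that] unfolding PF_def by simp
  have ac: "addchar (E (p^j)) \<psi>"
    unfolding addchar_def \<psi>_def
  proof (intro ballI)
    fix x y assume xy: "x \<in> E (p^j)" "y \<in> E (p^j)"
    have "x + y \<in> E (p^j)" using E_add xy by blast
    hence "Tr0 j x + Tr0 j y \<in> PF" using inPF Tr0_add by metis
    thus "zeta (rep (Tr0 j (x + y))) = zeta (rep (Tr0 j x)) * zeta (rep (Tr0 j y))"
      using rep_add[OF inPF[OF xy(1)] inPF[OF xy(2)]] by (simp add: Tr0_add)
  qed
  have r0: "rep (0::'a) = 0"
  proof -
    have "(0::'a) \<in> PF" unfolding PF_def using p_gt1 by simp
    hence "rep (0::'a) < p" "(of_nat (rep (0::'a)) :: 'a) = of_nat 0" using rep by auto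
    thus ?thesis using of_nat_inj_p p_gt1 by (metis less_trans zero_less_one)
  qed
  have z: "(0::'a) ^ (p ^ i) = 0" for i using p_gt1 by (simp add: power_0_left)
  have T0: "Tr0 j 0 = (0::'a)" unfolding Tr0_def by (intro sum.neutral) (simp add: z)
  have psi0: "\<psi> 0 = 1" unfolding \<psi>_def T0 r0 zeta_def by simp
  obtain x0 where x0: "x0 \<in> E (p^j)" "Tr0 j x0 \<noteq> 0" using Tr0_nonzero[OF assms] by blast
  have "rep (Tr0 j x0) \<noteq> 0" using rep(2)[OF inPF[OF x0(1)]] x0(2) by (metis of_nat_0)
  hence "\<psi> x0 \<noteq> 1" unfolding \<psi>_def using zeta_ne1 rep(1)[OF inPF[OF x0(1)]] by simp
  hence "(\<Sum>x\<in>E (p^j). \<psi> x) = 0"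
    using char_sum_zero[OF E_finite ac x0(1)] E_add E_diff by blast
  thus ?thesis using ac psi0 unfolding goodchar_def by blast
qed

lemma sq_dvd:
  assumes "2 * j dvd m"
  shows "(p^j)^2 - 1 dvd q - 1" "p ^ j - 1 dvd q - 1"
proof -
  show "(p^j)^2 - 1 dvd q - 1" using pow_sub1_dvd[OF assms, of p] by (simp add: power_mult mult.commute)
  have "j dvd m" using assms by (meson dvd_mult_right)
  thus "p ^ j - 1 dvd q - 1" using pow_sub1_dvd by blast
qed

lemma quad_identity:
  fixes f :: "'a \<Rightarrow> 'a \<Rightarrow> complex"
  assumes "j > 0" "2 * j dvd m"
  defines "Q \<equiv> p ^ j"
  shows "(\<Sum>x\<in>E (Q^2). f (x + x^Q) (x * x^Q)) + (\<Sum>u\<in>E Q. \<Sum>v\<in>E Q. f (u + v) (u * v))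
         = 2 * (\<Sum>t\<in>E Q. \<Sum>c\<in>E Q. f t c)"
proof -
  let ?K = "E Q" and ?L = "E (Q^2)"
  have Q2: "Q \<ge> 2" unfolding Q_def using p_gt1 assms(1) by (metis Suc_1 Suc_leI one_less_power)
  have cK: "card ?K = Q" unfolding Q_def by (rule card_E) (use sq_dvd[OF assms(2)] Q2 Q_def in auto)
  have cL: "card ?L = Q^2" unfolding Q_def
    by (rule card_E) (use sq_dvd[OF assms(2)] Q2 Q_def in \<open>auto simp: power2_eq_square intro: order_trans[OF Q2]\<close>)
  have xQQ: "x ^ Q ^ 2 = x" if "x \<in> ?L" for x using that unfolding E_def by simp
  have KL: "?K \<subseteq> ?L" unfolding E_def by (auto simp: power2_eq_square power_mult)
  have Qp: "Q = p ^ j" by (simp add: Q_def)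
  have trK: "x + x^Q \<in> ?K" if "x \<in> ?L" for x
  proof -
    have "(x + x^Q) ^ Q = x ^ Q + (x ^ Q) ^ Q" unfolding Qp by (rule frob_add)
    also have "(x ^ Q) ^ Q = x" using xQQ[OF that] by (simp add: power_mult[symmetric] power2_eq_square)
    finally show ?thesis unfolding E_def by simp
  qed
  have nK: "x * x^Q \<in> ?K" if "x \<in> ?L" for x
  proof -
    have "(x * x^Q) ^ Q = x ^ Q * (x ^ Q) ^ Q" by (simp add: power_mult_distrib)
    also have "(x ^ Q) ^ Q = x" using xQQ[OF that] by (simp add: power_mult[symmetric] power2_eq_square)
    finally show ?thesis unfolding E_def by (simp add: mult.commute)
  qed
  define gL where "gL x = (x + x^Q, x * x^Q)" for x :: 'a
  define gP where "gP = (\<lambda>(u,v). (u + v, u * (v::'a)))"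
  define cLf where "cLf b = card {a\<in>?L. gL a = b}" for b
  define cPf where "cPf b = card {a\<in>?K \<times> ?K. gP a = b}" for b
  have imL: "gL ` ?L \<subseteq> ?K \<times> ?K" unfolding gL_def using trK nK by auto
  have imP: "gP ` (?K \<times> ?K) \<subseteq> ?K \<times> ?K" unfolding gP_def
    using E_add[of _ j] E_mult by (auto simp: Q_def)
  have s1: "(\<Sum>x\<in>?L. f (x + x^Q) (x * x^Q)) = (\<Sum>b\<in>?K \<times> ?K. of_nat (cLf b) * case_prod f b)"
    using sum_fibres[OF E_finite _ imL, of "case_prod f"] unfolding cLf_def gL_def by simp
  have s2: "(\<Sum>u\<in>?K. \<Sum>v\<in>?K. f (u + v) (u * v)) = (\<Sum>b\<in>?K \<times> ?K. of_nat (cPf b) * case_prod f b)"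
  proof -
    have "(\<Sum>u\<in>?K. \<Sum>v\<in>?K. f (u + v) (u * v)) = (\<Sum>a\<in>?K \<times> ?K. case_prod f (gP a))"
      unfolding gP_def by (simp add: sum.cartesian_product case_prod_beta)
    also have "\<dots> = (\<Sum>b\<in>?K \<times> ?K. of_nat (cPf b) * case_prod f b)"
      unfolding cPf_def by (rule sum_fibres) (use imP in auto)
    finally show ?thesis .
  qed
  have le2: "cLf b + cPf b \<le> 2" if "b \<in> ?K \<times> ?K" for b
  proof -
    obtain t c where b: "b = (t, c)" by (cases b)
    have rootL: "y * y - t * y + c = 0" if "y \<in> ?L" "gL y = b" for y
      using that unfolding gL_def b by (auto simp: algebra_simps)
    show ?thesis
    proof (cases "\<exists>u\<in>?K. \<exists>v\<in>?K. u + v = t \<and> u * v = c")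
      case True
      then obtain u v where uv: "u \<in> ?K" "v \<in> ?K" "u + v = t" "u * v = c" by blast
      have Lsub: "{a\<in>?L. gL a = b} \<subseteq> {u, v}"
      proof (rule subsetI)
        fix y assume "y \<in> {a\<in>?L. gL a = b}"
        hence y: "y \<in> ?L" "gL y = b" by auto
        have "y = u \<or> y = v" using rootL[OF y] uv(3,4) by (intro root2) simp
        thus "y \<in> {u, v}" by auto
      qed
      have Psub: "{a\<in>?K \<times> ?K. gP a = b} \<subseteq> {(u, v), (v, u)}"
      proof (rule subsetI)
        fix a assume "a \<in> {a\<in>?K \<times> ?K. gP a = b}"
        then obtain u' v' where a: "a = (u', v')" "gP (u', v') = b" by auto
        have e: "u' + v' = t" "u' * v' = c" using a(2) unfolding gP_def b by auto
        have "u' * u' - (u + v) * u' + u * v = 0" using e uv(3,4) by (auto simp: algebra_simps)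
        hence "u' = u \<or> u' = v" by (rule root2)
        moreover have "v' = t - u'" using e(1) by (metis add_diff_cancel_left')
        ultimately show "a \<in> {(u, v), (v, u)}" using a(1) uv(3) by auto
      qed
      show ?thesis
      proof (cases "u = v")
        case True
        have "cLf b \<le> 1" unfolding cLf_def
          using card_mono[OF _ Lsub] True by simp
        moreover have "cPf b \<le> 1" unfolding cPf_def using card_mono[OF _ Psub] True by simp
        ultimately show ?thesis by simp
      next
        case False
        have E0: "{a\<in>?L. gL a = b} = {}"
        proof (rule equals0I)
          fix y assume "y \<in> {a\<in>?L. gL a = b}"
          hence y: "y \<in> ?L" "gL y = b" by auto
          have yK: "y = u \<or> y = v" using Lsub y by auto
          hence "y \<in> ?K" using uv by auto
          hence "y ^ Q = y" unfolding E_def by simp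
          hence yy: "y + y = u + v" using y(2) uv(3) unfolding gL_def b by simp
          from yK show False
          proof
            assume "y = u" with yy have "u + u = u + v" by simp
            hence "u = v" by (rule add_left_imp_eq)
            thus False using False by simp
          next
            assume "y = v" with yy have "v + v = u + v" by simp
            hence "v = u" by (rule add_right_imp_eq)
            hence "u = v" by (rule sym)
            thus False using False by simp
          qed
        qed
        have "cLf b = 0" unfolding cLf_def E0 by (rule card.empty)
        moreover have "cPf b \<le> 2"
        proof -
          have "card {(u, v), (v, u)} \<le> 2" by (rule card_insert_le_m1) simp_all
          moreover have "cPf b \<le> card {(u, v), (v, u)}" unfolding cPf_def by (rule card_mono[OF _ Psub]) simp
          ultimately show ?thesis by linarith
        qed
        ultimately show ?thesis by simp
      qed
    next
      case False
      have "{a\<in>?K \<times> ?K. gP a = b} = {}" using False unfolding gP_def b by auto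
      hence cP0: "cPf b = 0" unfolding cPf_def by (simp only: card.empty)
      have "cLf b \<le> 2"
      proof (cases "{a\<in>?L. gL a = b} = {}")
        case True thus ?thesis unfolding cLf_def by (simp only: card.empty)
      next
        case False
        then obtain x where x: "x \<in> ?L" "gL x = b" by blast
        have "{a\<in>?L. gL a = b} \<subseteq> {x, x^Q}"
        proof (rule subsetI)
          fix y assume "y \<in> {a\<in>?L. gL a = b}"
          hence y: "y \<in> ?L" "gL y = b" by auto
          have "y * y - (x + x^Q) * y + x * x^Q = 0"
            using rootL[OF y(1,2)] x(2) unfolding gL_def b by simp
          thus "y \<in> {x, x^Q}" using root2 by blast
        qed
        hence "card {a\<in>?L. gL a = b} \<le> card {x, x^Q}" by (intro card_mono) auto
        also have "\<dots> \<le> 2" by (rule card_insert_le_m1) simp_all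
        finally show ?thesis unfolding cLf_def .
      qed
      thus ?thesis using cP0 by simp
    qed
  qed
  have sumL: "(\<Sum>b\<in>?K \<times> ?K. cLf b) = Q^2"
    unfolding cLf_def using card_fibres_sum[OF E_finite _ imL] cL by simp
  have sumP: "(\<Sum>b\<in>?K \<times> ?K. cPf b) = Q^2"
    unfolding cPf_def using card_fibres_sum[OF _ _ imP] cK by (simp add: card_cartesian_product power2_eq_square)
  have tot: "(\<Sum>b\<in>?K \<times> ?K. cLf b + cPf b) = 2 * card (?K \<times> ?K)"
    using sumL sumP cK by (simp add: sum.distrib card_cartesian_product power2_eq_square)
  have eq2: "cLf b + cPf b = 2" if "b \<in> ?K \<times> ?K" for b
    using all_eq_2[of "?K \<times> ?K" "\<lambda>b. cLf b + cPf b"] le2 tot that by simp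
  have "(\<Sum>x\<in>?L. f (x + x^Q) (x * x^Q)) + (\<Sum>u\<in>?K. \<Sum>v\<in>?K. f (u + v) (u * v))
        = (\<Sum>b\<in>?K \<times> ?K. of_nat (cLf b + cPf b) * case_prod f b)"
    unfolding s1 s2 by (simp add: sum.distrib[symmetric] distrib_right)
  also have "\<dots> = (\<Sum>b\<in>?K \<times> ?K. 2 * case_prod f b)"
    by (intro sum.cong refl) (simp add: eq2)
  also have "\<dots> = 2 * (\<Sum>t\<in>?K. \<Sum>c\<in>?K. f t c)"
    by (simp add: sum_distrib_left sum.cartesian_product)
  finally show ?thesis .
qed

end


context ffield
begin

definition S :: "nat \<Rightarrow> nat \<Rightarrow> 'a set" where "S k Q = {x. x ^ ((Q - 1) div k) = 1}"

definition eta :: "('a \<Rightarrow> complex) \<Rightarrow> 'a set \<Rightarrow> 'a \<Rightarrow> complex" where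
  "eta \<psi> A a = (\<Sum>x\<in>A. \<psi> (a * x))"

lemma S_facts:
  assumes "k > 0" "k dvd Q - 1" "Q \<ge> 2"
  shows "x \<in> S k Q \<Longrightarrow> x \<noteq> 0"
    and "x \<in> S k Q \<Longrightarrow> x \<in> E Q"
    and "x \<in> S k Q \<Longrightarrow> y \<in> S k Q \<Longrightarrow> x * y \<in> S k Q"
    and "x \<in> S k Q \<Longrightarrow> inverse x \<in> S k Q"
    and "x \<in> S k Q \<Longrightarrow> y \<in> S k Q \<Longrightarrow> x / y \<in> S k Q"
    and "1 \<in> S k Q"
proof -
  obtain r where r: "Q - 1 = k * r" using assms(2) by blast
  have rd: "(Q - 1) div k = r" using r assms(1) by simp
  have rpos: "r > 0" using r assms(3) by (cases r) auto
  show "x \<in> S k Q \<Longrightarrow> x \<noteq> 0" unfolding S_def rd using rpos by (auto simp: power_0_left)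
  show "x \<in> S k Q \<Longrightarrow> x \<in> E Q"
  proof -
    assume "x \<in> S k Q"
    hence "x ^ r = 1" unfolding S_def rd by simp
    hence "x ^ (Q - 1) = 1" unfolding r by (simp add: power_mult mult.commute[of k])
    moreover have "Q = Suc (Q - 1)" using assms(3) by simp
    ultimately have "x ^ Q = x" by (metis power_Suc mult_1_right)
    thus ?thesis unfolding E_def by simp
  qed
  show "x \<in> S k Q \<Longrightarrow> y \<in> S k Q \<Longrightarrow> x * y \<in> S k Q" unfolding S_def by (simp add: power_mult_distrib)
  show "x \<in> S k Q \<Longrightarrow> inverse x \<in> S k Q" unfolding S_def by (simp add: power_inverse)
  show "x \<in> S k Q \<Longrightarrow> y \<in> S k Q \<Longrightarrow> x / y \<in> S k Q" unfolding S_def by (simp add: power_divide)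
  show "1 \<in> S k Q" unfolding S_def by simp
qed

lemma eta_reindex:
  assumes "a \<noteq> 0"
  shows "eta \<psi> A a = (\<Sum>v\<in>{v. v / a \<in> A}. \<psi> v)"
  unfolding eta_def
  by (rule sum.reindex_bij_witness[of _ "\<lambda>v. v / a" "\<lambda>x. a * x"]) (use assms in auto)

lemma sum_if_set:
  assumes "finite B" "{v. P v} \<subseteq> B"
  shows "(\<Sum>v\<in>{v. P v}. f v) = (\<Sum>v\<in>B. if P v then f v else (0::complex))"
proof -
  have "{v. P v} = {v\<in>B. P v}" using assms(2) by auto
  thus ?thesis using sum.inter_filter[OF assms(1), of f P] by simp
qed

lemma Qge2: "j > 0 \<Longrightarrow> p ^ j \<ge> 2" using p_gt1 by (metis Suc_1 Suc_leI one_less_power)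

lemma tr_norm_in:
  assumes "x \<in> E ((p^j)^2)"
  shows "x + x ^ (p^j) \<in> E (p^j)" "x * x ^ (p^j) \<in> E (p^j)"
proof -
  let ?Q = "p^j"
  have xQQ: "(x ^ ?Q) ^ ?Q = x" using assms unfolding E_def by (simp add: power_mult[symmetric] power2_eq_square)
  have "(x + x^?Q) ^ ?Q = x ^ ?Q + (x ^ ?Q) ^ ?Q" by (rule frob_add)
  thus "x + x ^ (p^j) \<in> E (p^j)" unfolding E_def using xQQ by (simp add: add.commute)
  have "(x * x^?Q) ^ ?Q = x ^ ?Q * (x ^ ?Q) ^ ?Q" by (simp add: power_mult_distrib)
  thus "x * x ^ (p^j) \<in> E (p^j)" unfolding E_def using xQQ by (simp add: mult.commute)
qed

lemma EK_sub_EL: "E Q \<subseteq> E (Q^2)" unfolding E_def by (auto simp: power2_eq_square power_mult)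

lemma lift_good:
  assumes "j > 0" "2 * j dvd m" "goodchar (E (p^j)) \<psi>"
  shows "goodchar (E ((p^j)^2)) (\<lambda>x. \<psi> (x + x ^ (p^j)))"
proof -
  let ?Q = "p^j"
  have ac: "addchar (E ?Q) \<psi>" "\<psi> 0 = 1" "(\<Sum>x\<in>E ?Q. \<psi> x) = 0" using assms(3) unfolding goodchar_def by auto
  have "addchar (E (?Q^2)) (\<lambda>x. \<psi> (x + x ^ ?Q))" unfolding addchar_def
  proof (intro ballI)
    fix x y assume xy: "x \<in> E (?Q^2)" "y \<in> E (?Q^2)"
    have eq: "(x + y) + (x + y) ^ ?Q = (x + x ^ ?Q) + (y + y ^ ?Q)" by (simp add: frob_add algebra_simps)
    show "\<psi> (x + y + (x + y) ^ ?Q) = \<psi> (x + x ^ ?Q) * \<psi> (y + y ^ ?Q)"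
      unfolding eq using ac(1) tr_norm_in(1)[OF xy(1)] tr_norm_in(1)[OF xy(2)] unfolding addchar_def by blast
  qed
  moreover have "\<psi> (0 + 0 ^ ?Q) = 1" using ac(2) p_gt1 by (simp add: power_0_left)
  moreover have "(\<Sum>x\<in>E (?Q^2). \<psi> (x + x ^ ?Q)) = 0"
  proof -
    have qi: "(\<Sum>x\<in>E (?Q^2). \<psi> (x + x^?Q)) + (\<Sum>u\<in>E ?Q. \<Sum>v\<in>E ?Q. \<psi> (u + v))
         = 2 * (\<Sum>t\<in>E ?Q. \<Sum>c\<in>E ?Q. \<psi> t)"
      using quad_identity[OF assms(1,2), of "\<lambda>t c. \<psi> t"] by simp
    have "(\<Sum>u\<in>E ?Q. \<Sum>v\<in>E ?Q. \<psi> (u + v)) = (\<Sum>u\<in>E ?Q. \<Sum>v\<in>E ?Q. \<psi> u * \<psi> v)"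
      using ac(1) unfolding addchar_def by (intro sum.cong refl) auto
    also have "\<dots> = 0" using ac(3) by (simp add: sum_distrib_left[symmetric])
    finally have z1: "(\<Sum>u\<in>E ?Q. \<Sum>v\<in>E ?Q. \<psi> (u + v)) = 0" .
    have "(\<Sum>t\<in>E ?Q. \<Sum>c\<in>E ?Q. \<psi> t) = 0" using ac(3) by (simp add: sum_distrib_left[symmetric])
    thus ?thesis using qi z1 by simp
  qed
  ultimately show ?thesis unfolding goodchar_def by simp
qed

end


lemma sq_minus1: "(Q::nat) ^ 2 - 1 = (Q + 1) * (Q - 1)"
  by (cases Q) (simp_all add: power2_eq_square algebra_simps)

lemma sum_if_const: "(\<Sum>t\<in>A. if P then f t else (0::complex)) = (if P then sum f A else 0)"
  by (cases P) simp_all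

context ffield
begin

lemma quad_step:
  assumes j: "j > 0" "2 * j dvd m" and k: "k > 0" "k dvd p^j - 1"
    and g: "goodchar (E (p^j)) \<psi>" and w: "w \<in> E (p^j)" "w \<noteq> 0"
    and hyp: "\<And>a. a \<in> E (p^j) \<Longrightarrow> a \<noteq> 0 \<Longrightarrow>
       eta \<psi> (S k (p^j)) a = (-1 - D) / of_nat k + (if a / w \<in> S k (p^j) then D else 0)"
    and a: "a \<in> E ((p^j)^2)" "a \<noteq> 0"
  shows "eta (\<lambda>x. \<psi> (x + x^(p^j))) (S k ((p^j)^2)) a
          = (-1 + D^2) / of_nat k + (if a / w \<in> S k ((p^j)^2) then (- (D^2)) else 0)"
proof -
  define Q where "Q = p ^ j"
  let ?K = "E Q" and ?L = "E (Q^2)" and ?SK = "S k Q" and ?SL = "S k (Q^2)"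
  have Q2: "Q \<ge> 2" unfolding Q_def using Qge2 j(1) by simp
  have Q22: "Q^2 \<ge> 2" using Q2 by (metis le_trans power2_nat_le_imp_le self_le_power zero_less_numeral le_add_same_cancel1 one_add_one pos2 power2_eq_square mult_le_mono)
  have kQ: "k dvd Q - 1" using k(2) unfolding Q_def .
  obtain r where r: "Q - 1 = k * r" using kQ by blast
  have rd: "(Q - 1) div k = r" using r k(1) by simp
  have kQ2: "k dvd Q^2 - 1" unfolding sq_minus1 r by simp
  have rd2: "(Q^2 - 1) div k = (Q + 1) * r" unfolding sq_minus1 r using k(1) by simp
  have SLN: "z \<in> ?SL \<longleftrightarrow> z ^ (Q + 1) \<in> ?SK" for z
    unfolding S_def rd rd2 by (simp only: mem_Collect_eq power_mult)
  have gK: "addchar ?K \<psi>" "\<psi> 0 = 1" "(\<Sum>x\<in>?K. \<psi> x) = 0" using g unfolding goodchar_def Q_def by auto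
  note SKf = S_facts[OF k(1) kQ Q2]
  note SLf = S_facts[OF k(1) kQ2 Q22]
  have normL: "z * z ^ Q = z ^ (Q + 1)" for z :: 'a by (simp add: mult.commute)
  define b where "b = a ^ (Q + 1)"
  have bK: "b \<in> ?K" using tr_norm_in(2)[of a j] a(1) unfolding b_def Q_def by (simp add: mult.commute)
  have b0: "b \<noteq> 0" unfolding b_def using a(2) by simp
  have wQ: "w ^ Q = w" using w(1) unfolding E_def Q_def by simp
  have fL: "finite ?L" "finite ?K" by simp_all
  have s1: "eta (\<lambda>x. \<psi> (x + x^Q)) ?SL a = (\<Sum>v\<in>?L. if v / a \<in> ?SL then \<psi> (v + v^Q) else 0)"
  proof -
    have "{v. v / a \<in> ?SL} \<subseteq> ?L"
    proof
      fix v assume "v \<in> {v. v / a \<in> ?SL}"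
      hence "v / a \<in> ?L" using SLf(2) by auto
      hence "a * (v / a) \<in> ?L" using E_mult a(1) unfolding Q_def by blast
      thus "v \<in> ?L" using a(2) by simp
    qed
    thus ?thesis using eta_reindex[OF a(2)] sum_if_set[OF fL(1)] by simp
  qed
  define F where "F t c = (if c / b \<in> ?SK then \<psi> t else 0)" for t c
  have s2: "(\<Sum>v\<in>?L. if v / a \<in> ?SL then \<psi> (v + v^Q) else 0) = (\<Sum>v\<in>?L. F (v + v^Q) (v * v^Q))"
  proof (intro sum.cong refl)
    fix v assume "v \<in> ?L"
    have "v / a \<in> ?SL \<longleftrightarrow> (v / a) ^ (Q + 1) \<in> ?SK" by (rule SLN)
    also have "(v / a) ^ (Q + 1) = (v * v ^ Q) / b" unfolding b_def normL by (simp add: power_divide)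
    finally show "(if v / a \<in> ?SL then \<psi> (v + v^Q) else 0) = F (v + v^Q) (v * v^Q)"
      unfolding F_def by simp
  qed
  have qi: "(\<Sum>v\<in>?L. F (v + v^Q) (v * v^Q)) + (\<Sum>u\<in>?K. \<Sum>v\<in>?K. F (u + v) (u * v))
         = 2 * (\<Sum>t\<in>?K. \<Sum>c\<in>?K. F t c)"
    using quad_identity[OF j, of F] unfolding Q_def by simp
  have s3: "(\<Sum>t\<in>?K. \<Sum>c\<in>?K. F t c) = 0"
  proof -
    have "(\<Sum>t\<in>?K. \<Sum>c\<in>?K. F t c) = (\<Sum>c\<in>?K. \<Sum>t\<in>?K. F t c)" by (rule sum.swap)
    also have "\<dots> = 0" unfolding F_def sum_if_const by (intro sum.neutral) (simp add: gK(3))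
    finally show ?thesis .
  qed
  have inner: "(\<Sum>v\<in>?K. F (u + v) (u * v)) = (if u = 0 then 0 else \<psi> u * eta \<psi> ?SK (b / u))"
    if u: "u \<in> ?K" for u
  proof (cases "u = 0")
    case True
    have "0 \<notin> ?SK" using SKf(1) by blast
    thus ?thesis unfolding F_def True by simp
  next
    case False
    have bu: "b / u \<noteq> 0" using False b0 by simp
    have sub: "{v. v / (b / u) \<in> ?SK} \<subseteq> ?K"
    proof
      fix v assume "v \<in> {v. v / (b / u) \<in> ?SK}"
      hence "v / (b / u) \<in> ?K" using SKf(2) by auto
      moreover have "b / u \<in> ?K" using E_divide bK u by blast
      ultimately have "(v / (b / u)) * (b / u) \<in> ?K" using E_mult by blast
      thus "v \<in> ?K" using bu by simp
    qed
    have "(\<Sum>v\<in>?K. F (u + v) (u * v)) = (\<Sum>v\<in>?K. \<psi> u * (if v / (b / u) \<in> ?SK then \<psi> v else 0))"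
    proof (intro sum.cong refl)
      fix v assume v: "v \<in> ?K"
      have e1: "u * v / b = v / (b / u)" using False b0 by (simp add: field_simps)
      have e2: "\<psi> (u + v) = \<psi> u * \<psi> v" using gK(1) u v unfolding addchar_def by blast
      show "F (u + v) (u * v) = \<psi> u * (if v / (b / u) \<in> ?SK then \<psi> v else 0)"
        unfolding F_def e1 e2 by simp
    qed
    also have "\<dots> = \<psi> u * eta \<psi> ?SK (b / u)"
      using eta_reindex[OF bu, of \<psi> ?SK] sum_if_set[OF fL(2) sub] by (simp add: sum_distrib_left)
    finally show ?thesis using False by simp
  qed
  have s4: "(\<Sum>u\<in>?K. \<Sum>v\<in>?K. F (u + v) (u * v))
      = (\<Sum>u\<in>?K. (if u = 0 then 0 else \<psi> u * ((-1 - D) / of_nat k + (if b / u / w \<in> ?SK then D else 0))))"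
  proof (intro sum.cong refl)
    fix u assume u: "u \<in> ?K"
    show "(\<Sum>v\<in>?K. F (u + v) (u * v)) = (if u = 0 then 0 else \<psi> u * ((-1 - D) / of_nat k + (if b / u / w \<in> ?SK then D else 0)))"
    proof (cases "u = 0")
      case True thus ?thesis using inner[OF u] by simp
    next
      case False
      have "b / u \<in> ?K" using E_divide bK u by blast
      moreover have "b / u \<noteq> 0" using False b0 by simp
      ultimately show ?thesis using inner[OF u] hyp[of "b / u"] False unfolding Q_def by simp
    qed
  qed
  have sumn0: "(\<Sum>u\<in>?K. if u = 0 then 0 else \<psi> u) = -1"
  proof -
    have "0 \<in> ?K" using E_0 Q2 by simp
    hence "(\<Sum>u\<in>?K. \<psi> u) = \<psi> 0 + (\<Sum>u\<in>?K - {0}. \<psi> u)" by (simp add: sum.remove)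
    hence "1 + (\<Sum>u\<in>?K - {0}. \<psi> u) = 0" using gK(2,3) by simp
    hence h: "(\<Sum>u\<in>?K - {0}. \<psi> u) = -1" by (simp only: add_eq_0_iff)
    have "(\<Sum>u\<in>?K. if u = 0 then 0 else \<psi> u) = (\<Sum>u\<in>?K - {0}. \<psi> u)"
      by (simp add: sum.If_cases Diff_eq Int_commute[of "- {0}"] Compl_eq)
    thus ?thesis using h by simp
  qed
  have sub2: "{u. u / (b / w) \<in> ?SK} \<subseteq> ?K"
  proof
    fix v assume "v \<in> {v. v / (b / w) \<in> ?SK}"
    hence "v / (b / w) \<in> ?K" using SKf(2) by auto
    moreover have "b / w \<in> ?K" using E_divide bK w(1) unfolding Q_def by blast
    ultimately have "(v / (b / w)) * (b / w) \<in> ?K" using E_mult by blast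
    thus "v \<in> ?K" using b0 w(2) by simp
  qed
  have bw0: "b / w \<noteq> 0" using b0 w(2) by simp
  have cond: "(u \<noteq> 0 \<and> b / u / w \<in> ?SK) \<longleftrightarrow> u / (b / w) \<in> ?SK" for u
  proof
    assume "u \<noteq> 0 \<and> b / u / w \<in> ?SK"
    hence h1: "b / u / w \<in> ?SK" and "u \<noteq> 0" by auto
    have "inverse (b / u / w) \<in> ?SK" by (rule SKf(4)[OF h1])
    moreover have "inverse (b / u / w) = u / (b / w)" using \<open>u \<noteq> 0\<close> b0 w(2) by (simp add: field_simps)
    ultimately show "u / (b / w) \<in> ?SK" by simp
  next
    assume h: "u / (b / w) \<in> ?SK"
    hence "u / (b / w) \<noteq> 0" using SKf(1) by blast
    hence u0: "u \<noteq> 0" by auto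
    have "inverse (u / (b / w)) \<in> ?SK" by (rule SKf(4)[OF h])
    moreover have "inverse (u / (b / w)) = b / u / w" using u0 b0 w(2) by (simp add: field_simps)
    ultimately show "u \<noteq> 0 \<and> b / u / w \<in> ?SK" using u0 by simp
  qed
  have s5: "(\<Sum>u\<in>?K. if u \<noteq> 0 \<and> b / u / w \<in> ?SK then \<psi> u else 0) = eta \<psi> ?SK (b / w)"
    using eta_reindex[OF bw0, of \<psi> ?SK] sum_if_set[OF fL(2) sub2] cond by simp
  have bwK: "b / w \<in> ?K" using E_divide bK w(1) unfolding Q_def by blast
  have s6: "eta \<psi> ?SK (b / w) = (-1 - D) / of_nat k + (if b / w / w \<in> ?SK then D else 0)"
    using hyp[OF _ bw0] bwK unfolding Q_def by simp
  have s7: "b / w / w \<in> ?SK \<longleftrightarrow> a / w \<in> ?SL"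
  proof -
    have "(a / w) ^ (Q + 1) = b / (w * w ^ Q)" unfolding b_def by (simp add: power_divide mult.commute)
    also have "\<dots> = b / w / w" using wQ by simp
    finally show ?thesis using SLN[of "a / w"] by simp
  qed
  have split: "(\<Sum>u\<in>?K. (if u = 0 then 0 else \<psi> u * ((-1 - D) / of_nat k + (if b / u / w \<in> ?SK then D else 0))))
     = (-1 - D) / of_nat k * (\<Sum>u\<in>?K. if u = 0 then 0 else \<psi> u)
       + D * (\<Sum>u\<in>?K. if u \<noteq> 0 \<and> b / u / w \<in> ?SK then \<psi> u else 0)"
  proof -
    have "(\<Sum>u\<in>?K. (if u = 0 then 0 else \<psi> u * ((-1 - D) / of_nat k + (if b / u / w \<in> ?SK then D else 0))))
      = (\<Sum>u\<in>?K. (-1 - D) / of_nat k * (if u = 0 then 0 else \<psi> u)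
          + D * (if u \<noteq> 0 \<and> b / u / w \<in> ?SK then \<psi> u else 0))"
      by (intro sum.cong refl) (simp add: algebra_simps)
    thus ?thesis by (simp add: sum.distrib sum_distrib_left)
  qed
  have "eta (\<lambda>x. \<psi> (x + x^Q)) ?SL a = - ((-1 - D) / of_nat k * (-1)
          + D * ((-1 - D) / of_nat k + (if a / w \<in> ?SL then D else 0)))"
    using s1 s2 qi s3 s4 split sumn0 s5 s6 s7 by (simp add: eq_diff_eq[symmetric] add.commute)
  also have "\<dots> = (-1 + D^2) / of_nat k + (if a / w \<in> ?SL then (- (D^2)) else 0)"
    using k(1) by (simp add: field_simps power2_eq_square)
  finally show ?thesis unfolding Q_def .
qed

end


context ffield
begin

lemma base_step:
  assumes j: "j > 0" "2 * j dvd m" and k: "k > 0" "k dvd p^j + 1"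
    and g: "goodchar (E (p^j)) \<psi>"
  shows "\<exists>w. w \<in> E ((p^j)^2) \<and> w \<noteq> 0 \<and> (\<forall>a. a \<in> E ((p^j)^2) \<longrightarrow> a \<noteq> 0 \<longrightarrow>
     eta (\<lambda>x. \<psi> (x + x^(p^j))) (S k ((p^j)^2)) a
       = (-1 - of_nat (p^j)) / of_nat k + (if a / w \<in> S k ((p^j)^2) then of_nat (p^j) else 0))"
proof -
  define \<omega> where "\<omega> = p ^ j"
  let ?K = "E \<omega>" and ?L = "E (\<omega>^2)" and ?SL = "S k (\<omega>^2)"
  define Tr where "Tr x = x + x ^ \<omega>" for x :: 'a
  have w2: "\<omega> \<ge> 2" unfolding \<omega>_def using Qge2 j(1) by simp
  have w22: "\<omega>^2 \<ge> 2" using w2 by (simp add: power2_eq_square) (metis le_trans mult_le_mono one_le_numeral Suc_1 mult_2 le_add2)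
  obtain s where s: "\<omega> + 1 = k * s" using k(2) unfolding \<omega>_def by blast
  have kL: "k dvd \<omega>^2 - 1" unfolding sq_minus1 s by simp
  have dL: "(\<omega>^2 - 1) div k = (\<omega> - 1) * s" unfolding sq_minus1 s using k(1) by simp
  note SLf = S_facts[OF k(1) kL w22]
  have cK: "card ?K = \<omega>" unfolding \<omega>_def by (rule card_E) (use sq_dvd[OF j(2)] w2 \<omega>_def in auto)
  have cL: "card ?L = \<omega>^2" unfolding \<omega>_def
    by (rule card_E) (use sq_dvd[OF j(2)] w22 \<omega>_def in auto)
  have cSL: "card ?SL = (\<omega> - 1) * s"
  proof -
    have "(\<omega>^2 - 1) div k dvd \<omega>^2 - 1" using kL by (metis dvd_div_mult_self dvd_triv_left)
    moreover have "\<omega>^2 - 1 dvd q - 1" using sq_dvd(1)[OF j(2)] unfolding \<omega>_def .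
    ultimately have "(\<omega>^2 - 1) div k dvd q - 1" by (rule dvd_trans)
    thus ?thesis unfolding S_def using card_roots1 dL by simp
  qed
  have gK: "addchar ?K \<psi>" "\<psi> 0 = 1" "(\<Sum>x\<in>?K. \<psi> x) = 0" using g unfolding goodchar_def \<omega>_def by auto
  have KL: "?K \<subseteq> ?L" by (rule EK_sub_EL)
  have trK: "Tr x \<in> ?K" if "x \<in> ?L" for x using tr_norm_in(1)[of x j] that unfolding Tr_def \<omega>_def by simp
  have trlin: "Tr (c * y) = c * Tr y" if "c \<in> ?K" for c y
    using that unfolding Tr_def E_def by (simp add: power_mult_distrib algebra_simps)
  have trdiff: "Tr (x - y) = Tr x - Tr y" for x y unfolding Tr_def \<omega>_def by (simp add: frob_diff)
  have KsubSL: "c \<in> ?SL" if "c \<in> ?K" "c \<noteq> 0" for c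
  proof -
    have "c ^ \<omega> = c" using that(1) unfolding E_def by simp
    moreover have "\<omega> = Suc (\<omega> - 1)" using w2 by simp
    ultimately have "c * c ^ (\<omega> - 1) = c" by (metis power_Suc)
    hence "c ^ (\<omega> - 1) = 1" using that(2) by (metis mult_cancel_left1)
    thus ?thesis unfolding S_def dL by (simp add: power_mult)
  qed
  obtain z0 where z0: "z0 \<in> ?L" "z0 \<noteq> 0" "Tr z0 = 0"
  proof -
    have "\<not> inj_on Tr ?L"
    proof
      assume "inj_on Tr ?L"
      hence "card ?L \<le> card ?K" using trK by (intro card_inj_on_le) auto
      thus False using cL cK w2 by (simp add: power2_eq_square)
    qed
    then obtain x y where xy: "x \<in> ?L" "y \<in> ?L" "x \<noteq> y" "Tr x = Tr y" unfolding inj_on_def by blast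
    have "x - y \<in> ?L" using E_diff xy unfolding \<omega>_def by (simp add: power_mult[symmetric])
    moreover have "x - y \<noteq> 0" using xy by simp
    moreover have "Tr (x - y) = 0" using xy trdiff by simp
    ultimately show ?thesis using that by blast
  qed
  have z0Q: "z0 ^ \<omega> = - z0" using z0(3) unfolding Tr_def by (simp add: eq_neg_iff_add_eq_0 add.commute)
  define Z where "Z = {y \<in> ?L. y \<noteq> 0 \<and> Tr y = 0}"
  have Zeq: "Z = (\<lambda>c. c * z0) ` (?K - {0})"
  proof
    show "(\<lambda>c. c * z0) ` (?K - {0}) \<subseteq> Z"
    proof
      fix y assume "y \<in> (\<lambda>c. c * z0) ` (?K - {0})"
      then obtain c where c: "c \<in> ?K" "c \<noteq> 0" "y = c * z0" by auto
      have "c \<in> ?L" using c KL by auto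
      hence "y \<in> ?L" using c z0 E_mult by blast
      moreover have "Tr y = 0" using c trlin z0 by simp
      ultimately show "y \<in> Z" unfolding Z_def using c z0 by simp
    qed
    show "Z \<subseteq> (\<lambda>c. c * z0) ` (?K - {0})"
    proof
      fix y assume "y \<in> Z"
      hence y: "y \<in> ?L" "y \<noteq> 0" "Tr y = 0" unfolding Z_def by auto
      have yQ: "y ^ \<omega> = - y" using y(3) unfolding Tr_def by (simp add: eq_neg_iff_add_eq_0 add.commute)
      have "(y / z0) ^ \<omega> = y / z0" using yQ z0Q by (simp add: power_divide)
      hence "y / z0 \<in> ?K - {0}" using y(2) z0(2) unfolding E_def by simp
      moreover have "y = (y / z0) * z0" using z0(2) by simp
      ultimately show "y \<in> (\<lambda>c. c * z0) ` (?K - {0})" by blast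
    qed
  qed
  have cZ: "card Z = \<omega> - 1"
  proof -
    have "inj_on (\<lambda>c. c * z0) (?K - {0})" using z0(2) by (auto simp: inj_on_def)
    hence "card Z = card (?K - {0})" unfolding Zeq by (rule card_image)
    also have "\<dots> = \<omega> - 1" using cK E_0[of \<omega>] w2 by (simp add: card_Diff_singleton)
    finally show ?thesis .
  qed
  have "\<forall>a. a \<in> ?L \<longrightarrow> a \<noteq> 0 \<longrightarrow> eta (\<lambda>x. \<psi> (Tr x)) ?SL a
       = (-1 - of_nat \<omega>) / of_nat k + (if a / z0 \<in> ?SL then of_nat \<omega> else 0)"
  proof (intro allI impI)
    fix a assume a: "a \<in> ?L" "a \<noteq> 0"
    let ?eta = "eta (\<lambda>x. \<psi> (Tr x)) ?SL a"
    have SLL: "x \<in> ?L" if "x \<in> ?SL" for x using SLf(2) that by blast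
    have axL: "a * x \<in> ?L" if "x \<in> ?SL" for x using E_mult a(1) SLL[OF that] by blast
    have resc: "(\<Sum>x\<in>?SL. \<psi> (Tr (a * (c * x)))) = ?eta" if c: "c \<in> ?K" "c \<noteq> 0" for c
      unfolding eta_def
    proof (rule sum.reindex_bij_witness[of _ "\<lambda>x. x / c" "\<lambda>x. c * x"])
      have cS: "c \<in> ?SL" using KsubSL c by blast
      show "\<And>x. x \<in> ?SL \<Longrightarrow> c * x \<in> ?SL" using SLf(3) cS by blast
      show "\<And>x. x \<in> ?SL \<Longrightarrow> x / c \<in> ?SL" using SLf(5) cS by blast
    qed (use c in auto)
    have inner: "(\<Sum>c\<in>?K - {0}. \<psi> (c * z)) = (if z = 0 then of_nat \<omega> - 1 else -1)" if z: "z \<in> ?K" for z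
    proof (cases "z = 0")
      case True
      have "card (?K - {0}) = \<omega> - 1" using cK E_0[of \<omega>] w2 by (simp add: card_Diff_singleton)
      thus ?thesis using True gK(2) w2 by (simp add: of_nat_diff)
    next
      case False
      have "(\<Sum>c\<in>?K. \<psi> (c * z)) = (\<Sum>c\<in>?K. \<psi> c)"
        by (rule sum.reindex_bij_witness[of _ "\<lambda>c. c / z" "\<lambda>c. c * z"])
           (use False z E_mult E_divide in auto)
      hence "(\<Sum>c\<in>?K. \<psi> (c * z)) = 0" using gK(3) by simp
      moreover have "0 \<in> ?K" using E_0 w2 by simp
      ultimately have "\<psi> (0 * z) + (\<Sum>c\<in>?K - {0}. \<psi> (c * z)) = 0" by (simp add: sum.remove)
      hence "(\<Sum>c\<in>?K - {0}. \<psi> (c * z)) = -1" using gK(2) by (simp add: add_eq_0_iff)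
      thus ?thesis using False by simp
    qed
    have "of_nat (\<omega> - 1) * ?eta = (\<Sum>c\<in>?K - {0}. ?eta)" using cK E_0[of \<omega>] w2 by (simp add: card_Diff_singleton)
    also have "\<dots> = (\<Sum>c\<in>?K - {0}. \<Sum>x\<in>?SL. \<psi> (Tr (a * (c * x))))" using resc by simp
    also have "\<dots> = (\<Sum>x\<in>?SL. \<Sum>c\<in>?K - {0}. \<psi> (c * Tr (a * x)))"
    proof -
      have "\<And>c x. c \<in> ?K \<Longrightarrow> Tr (a * (c * x)) = c * Tr (a * x)"
        using trlin by (simp add: mult.left_commute)
      hence "(\<Sum>c\<in>?K - {0}. \<Sum>x\<in>?SL. \<psi> (Tr (a * (c * x)))) = (\<Sum>c\<in>?K - {0}. \<Sum>x\<in>?SL. \<psi> (c * Tr (a * x)))"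
        by (intro sum.cong refl) auto
      thus ?thesis by (simp add: sum.swap[of _ "?K - {0}"])
    qed
    also have "\<dots> = (\<Sum>x\<in>?SL. if Tr (a * x) = 0 then of_nat \<omega> - 1 else -1)"
      using inner trK axL by (intro sum.cong refl) auto
    also have "\<dots> = (\<Sum>x\<in>?SL. (if Tr (a * x) = 0 then of_nat \<omega> else 0) - 1)"
      by (intro sum.cong refl) auto
    also have "\<dots> = of_nat \<omega> * of_nat (card {x\<in>?SL. Tr (a * x) = 0}) - of_nat (card ?SL)"
      by (simp add: sum_subtractf sum.If_cases Int_def)
    finally have main: "of_nat (\<omega> - 1) * ?eta
       = of_nat \<omega> * of_nat (card {x\<in>?SL. Tr (a * x) = 0}) - of_nat ((\<omega> - 1) * s)" using cSL by simp
    have img: "card {x\<in>?SL. Tr (a * x) = 0} = card {y\<in>Z. y / a \<in> ?SL}"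
    proof -
      have "(\<lambda>x. a * x) ` {x\<in>?SL. Tr (a * x) = 0} = {y\<in>Z. y / a \<in> ?SL}"
      proof
        show "(\<lambda>x. a * x) ` {x\<in>?SL. Tr (a * x) = 0} \<subseteq> {y\<in>Z. y / a \<in> ?SL}"
          using axL a(2) SLf(1) unfolding Z_def by auto
        show "{y\<in>Z. y / a \<in> ?SL} \<subseteq> (\<lambda>x. a * x) ` {x\<in>?SL. Tr (a * x) = 0}"
        proof
          fix y assume "y \<in> {y\<in>Z. y / a \<in> ?SL}"
          hence y: "y \<in> Z" "y / a \<in> ?SL" by auto
          have "y = a * (y / a)" using a(2) by simp
          moreover have "Tr (a * (y / a)) = 0" using y(1) a(2) unfolding Z_def by simp
          ultimately show "y \<in> (\<lambda>x. a * x) ` {x\<in>?SL. Tr (a * x) = 0}" using y(2) by blast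
        qed
      qed
      moreover have "inj_on (\<lambda>x. a * x) {x\<in>?SL. Tr (a * x) = 0}" using a(2) by (auto simp: inj_on_def)
      ultimately show ?thesis using card_image by fastforce
    qed
    have cnt: "card {y\<in>Z. y / a \<in> ?SL} = (if z0 / a \<in> ?SL then \<omega> - 1 else 0)"
    proof (cases "z0 / a \<in> ?SL")
      case True
      have "{y\<in>Z. y / a \<in> ?SL} = Z"
      proof safe
        fix y assume "y \<in> Z"
        then obtain c where c: "c \<in> ?K" "c \<noteq> 0" "y = c * z0" unfolding Zeq by auto
        have e: "y / a = c * (z0 / a)" using c(3) by simp
        show "y / a \<in> ?SL" unfolding e by (rule SLf(3)[OF KsubSL[OF c(1,2)] True])
      qed
      thus ?thesis using True cZ by simp
    next
      case False
      have "{y\<in>Z. y / a \<in> ?SL} = {}"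
      proof (rule equals0I)
        fix y assume "y \<in> {y\<in>Z. y / a \<in> ?SL}"
        hence y: "y \<in> Z" "y / a \<in> ?SL" by auto
        then obtain c where c: "c \<in> ?K" "c \<noteq> 0" "y = c * z0" unfolding Zeq by auto
        have e: "z0 / a = (y / a) / c" using c(2,3) by simp
        have "z0 / a \<in> ?SL" unfolding e by (rule SLf(5)[OF y(2) KsubSL[OF c(1,2)]])
        thus False using False by simp
      qed
      thus ?thesis using False by simp
    qed
    have inv: "z0 / a \<in> ?SL \<longleftrightarrow> a / z0 \<in> ?SL"
    proof
      assume "z0 / a \<in> ?SL" from SLf(4)[OF this] show "a / z0 \<in> ?SL" by simp
    next
      assume "a / z0 \<in> ?SL" from SLf(4)[OF this] show "z0 / a \<in> ?SL" by simp
    qed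
    have ks: "(of_nat k :: complex) * of_nat s = of_nat \<omega> + 1" using s by (metis of_nat_1 of_nat_add of_nat_mult)
    have w1: "(of_nat (\<omega> - 1) :: complex) \<noteq> 0" using w2 by simp
    have "of_nat (\<omega> - 1) * ?eta = of_nat (\<omega> - 1) * ((if a / z0 \<in> ?SL then of_nat \<omega> else 0) - of_nat s)"
    proof (cases "a / z0 \<in> ?SL")
      case True
      hence "card {x\<in>?SL. Tr (a * x) = 0} = \<omega> - 1" using img cnt inv by simp
      hence "of_nat (\<omega> - 1) * ?eta = of_nat \<omega> * of_nat (\<omega> - 1) - of_nat (\<omega> - 1) * (of_nat s :: complex)"
        using main by (simp only: of_nat_mult)
      thus ?thesis using True by (simp add: algebra_simps)
    next
      case False
      hence "card {x\<in>?SL. Tr (a * x) = 0} = 0" using img cnt inv by simp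
      hence "of_nat (\<omega> - 1) * ?eta = - (of_nat (\<omega> - 1) * (of_nat s :: complex))"
        using main by (simp only: of_nat_mult of_nat_0 mult_zero_right diff_0)
      thus ?thesis using False by (simp add: algebra_simps)
    qed
    hence "?eta = (if a / z0 \<in> ?SL then of_nat \<omega> else 0) - of_nat s" using w1 by simp
    also have "\<dots> = (-1 - of_nat \<omega>) / of_nat k + (if a / z0 \<in> ?SL then of_nat \<omega> else 0)"
      using ks k(1) by (simp add: field_simps)
    finally show "?eta = (-1 - of_nat \<omega>) / of_nat k + (if a / z0 \<in> ?SL then of_nat \<omega> else 0)" .
  qed
  thus ?thesis using z0 unfolding Tr_def \<omega>_def by blast
qed

end


lemma odd_pow_dvd: "odd n \<Longrightarrow> (x::nat) + 1 dvd x ^ n + 1"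
proof -
  assume n: "odd n"
  have "[int x = -1] (mod int x + 1)" by (simp add: cong_iff_dvd_diff)
  hence "[int x ^ n = (-1)^n] (mod int x + 1)" by (rule cong_pow)
  hence "int x + 1 dvd int x ^ n + 1" using n by (simp add: cong_iff_dvd_diff)
  hence "int (x + 1) dvd int (x ^ n + 1)" by (simp add: add.commute)
  thus ?thesis by (simp only: int_dvd_int_iff)
qed

lemma dvd_iff_cong_m1: "(k::nat) dvd a + 1 \<longleftrightarrow> [int a = -1] (mod int k)"
proof -
  have "k dvd a + 1 \<longleftrightarrow> int k dvd int (a + 1)" by (simp only: int_dvd_int_iff)
  also have "\<dots> \<longleftrightarrow> int k dvd int a - (-1)" by (simp add: add.commute)
  also have "\<dots> \<longleftrightarrow> [int a = -1] (mod int k)" by (simp only: cong_iff_dvd_diff)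
  finally show ?thesis .
qed

lemma odd_even_decomp: "(s::nat) > 0 \<Longrightarrow> \<exists>e s'. s = 2 ^ e * s' \<and> odd s'"
proof (induction s rule: less_induct)
  case (less s)
  show ?case
  proof (cases "odd s")
    case True thus ?thesis by (intro exI[of _ 0] exI[of _ s]) simp
  next
    case False
    then obtain s'' where s'': "s = 2 * s''" by blast
    hence "s'' < s" "s'' > 0" using less.prems by auto
    then obtain e s' where "s'' = 2 ^ e * s'" "odd s'" using less.IH by blast
    thus ?thesis using s'' by (intro exI[of _ "Suc e"] exI[of _ s']) simp
  qed
qed

lemma least_dvd:
  fixes p k t :: nat
  assumes k2: "k > 2" and t: "t > 0" "k dvd p ^ t + 1"
  defines "t0 \<equiv> (LEAST j. 0 < j \<and> k dvd p ^ j + 1)"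
  shows "t0 dvd t" "t0 > 0" "k dvd p ^ t0 + 1"
proof -
  have P0: "0 < t0 \<and> k dvd p ^ t0 + 1" unfolding t0_def by (rule LeastI[of _ t]) (use t in auto)
  thus "t0 > 0" "k dvd p ^ t0 + 1" by auto
  have notP: "\<not> (0 < r \<and> k dvd p ^ r + 1)" if "r < t0" for r
    using not_less_Least[of r "\<lambda>j. 0 < j \<and> k dvd p ^ j + 1"] that unfolding t0_def by blast
  let ?m = "int k"
  have c0: "[int p ^ t0 = -1] (mod ?m)" using P0 dvd_iff_cong_m1[of k "p ^ t0"] by simp
  have ct: "[int p ^ t = -1] (mod ?m)" using t(2) dvd_iff_cong_m1[of k "p ^ t"] by simp
  define u where "u = t div t0"
  define r where "r = t mod t0"
  have tr: "t = t0 * u + r" unfolding u_def r_def by simp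
  have rlt: "r < t0" unfolding r_def using P0 by simp
  have "int p ^ t = (int p ^ t0) ^ u * int p ^ r" unfolding tr by (simp add: power_add power_mult)
  moreover have "[(int p ^ t0) ^ u * int p ^ r = (-1) ^ u * int p ^ r] (mod ?m)"
    by (intro cong_scalar_right cong_pow c0)
  ultimately have c1: "[(-1) ^ u * int p ^ r = -1] (mod ?m)" using ct
    by (metis cong_sym cong_trans)
  have not11: "\<not> [1 = -1] (mod ?m)"
  proof
    assume "[1 = -1] (mod ?m)"
    hence "?m dvd 2" by (simp add: cong_iff_dvd_diff)
    hence "k dvd 2" by presburger
    thus False using k2 by (simp add: nat_dvd_not_less)
  qed
  show "t0 dvd t"
  proof (cases "even u")
    case True
    hence "[int p ^ r = -1] (mod ?m)" using c1 by simp
    moreover have "r = 0"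
    proof (rule ccontr)
      assume "r \<noteq> 0"
      moreover have "k dvd p ^ r + 1" using \<open>[int p ^ r = -1] (mod ?m)\<close> dvd_iff_cong_m1 by simp
      ultimately show False using notP[OF rlt] by simp
    qed
    ultimately have "[1 = -1] (mod ?m)" by simp
    thus ?thesis using not11 by simp
  next
    case False
    hence "[- (int p ^ r) = -1] (mod ?m)" using c1 by simp
    hence cr: "[int p ^ r = 1] (mod ?m)" using cong_minus_minus_iff by (metis)
    have "r = 0"
    proof (rule ccontr)
      assume r0: "r \<noteq> 0"
      have "int p ^ t0 = int p ^ (t0 - r) * int p ^ r" using rlt by (simp add: power_add[symmetric])
      moreover have "[int p ^ (t0 - r) * int p ^ r = int p ^ (t0 - r) * 1] (mod ?m)"
        by (intro cong_scalar_left cr)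
      ultimately have "[int p ^ (t0 - r) = -1] (mod ?m)" using c0 by (metis cong_sym cong_trans mult_1_right)
      hence "k dvd p ^ (t0 - r) + 1" using dvd_iff_cong_m1 by simp
      moreover have "t0 - r < t0" "0 < t0 - r" using r0 rlt by auto
      ultimately show False using notP by blast
    qed
    thus ?thesis unfolding r_def by (simp add: mod_eq_0_iff_dvd)
  qed
qed


context ffield
begin

definition Dv :: "nat \<Rightarrow> nat \<Rightarrow> complex" where
  "Dv j e = (if e = 0 then 1 else -1) * of_nat (p ^ (j * 2 ^ e))"

lemma tower:
  assumes j: "j > 0" and k: "k > 0" "k dvd p^j + 1"
  shows "j * 2^(e+1) dvd m \<Longrightarrow> \<exists>\<psi> w. goodchar (E (p^(j*2^(e+1)))) \<psi> \<and> w \<in> E (p^(j*2^(e+1))) \<and> w \<noteq> 0 \<and>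
     (\<forall>a. a \<in> E (p^(j*2^(e+1))) \<longrightarrow> a \<noteq> 0 \<longrightarrow> eta \<psi> (S k (p^(j*2^(e+1)))) a
        = (-1 - Dv j e) / of_nat k + (if a / w \<in> S k (p^(j*2^(e+1))) then Dv j e else 0))"
proof (induction e)
  case 0
  hence m2: "2 * j dvd m" by (simp add: mult.commute)
  hence jm: "j dvd m" by (meson dvd_mult_right)
  obtain \<psi> where g: "goodchar (E (p^j)) \<psi>" using base_char[OF j jm] by blast
  have eq: "p^(j*2^(0+1)) = (p^j)^2" by (simp add: power_mult)
  have D0: "Dv j 0 = of_nat (p^j)" unfolding Dv_def by simp
  show ?case unfolding eq D0 using lift_good[OF j m2 g] base_step[OF j m2 k g] by blast
next
  case (Suc e)
  define J where "J = j * 2^(e+1)"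
  have Jm: "2 * J dvd m" using Suc.prems unfolding J_def by (simp add: mult.commute mult.left_commute)
  have jm: "j * 2^(e+1) dvd m" using Jm unfolding J_def by (meson dvd_mult_right)
  have J0: "J > 0" unfolding J_def using j by simp
  obtain \<psi> w where IH: "goodchar (E (p^J)) \<psi>" "w \<in> E (p^J)" "w \<noteq> 0"
     "\<And>a. a \<in> E (p^J) \<Longrightarrow> a \<noteq> 0 \<Longrightarrow> eta \<psi> (S k (p^J)) a
        = (-1 - Dv j e) / of_nat k + (if a / w \<in> S k (p^J) then Dv j e else 0)"
    using Suc.IH[OF jm] unfolding J_def by blast
  have kJ: "k dvd p^J - 1"
  proof -
    have "p^j + 1 dvd (p^j)^2 - 1" unfolding sq_minus1 by (rule dvd_triv_left)
    moreover have "(p^j)^2 - 1 dvd p^J - 1"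
    proof -
      have "2 * j dvd J" unfolding J_def by simp
      hence "p^(2*j) - 1 dvd p^J - 1" by (rule pow_sub1_dvd)
      thus ?thesis by (simp add: power_mult[symmetric] mult.commute)
    qed
    ultimately show ?thesis using k(2) by (meson dvd_trans)
  qed
  have eq: "p^(j*2^(Suc e+1)) = (p^J)^2" unfolding J_def by (simp add: power_mult[symmetric] mult.commute mult.left_commute)
  have DS: "Dv j (Suc e) = - ((Dv j e)^2)"
  proof -
    have a1: "j * 2 ^ Suc e = (j * 2^e) * 2" by simp
    have a2: "p ^ (j * 2 ^ Suc e) = (p^(j*2^e))^2" by (simp only: a1 power_mult)
    have a3: "Dv j (Suc e) = - of_nat (p ^ (j * 2 ^ Suc e))" unfolding Dv_def by simp
    have a4: "(Dv j e)^2 = (of_nat (p^(j*2^e)))^2" unfolding Dv_def by (simp add: power_mult_distrib)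
    show ?thesis unfolding a3 a4 a2 by simp
  qed
  show ?case unfolding eq DS
    using lift_good[OF J0 Jm IH(1)] quad_step[OF J0 Jm k(1) kJ IH(1) IH(2) IH(3) IH(4)] IH(2) IH(3)
      EK_sub_EL[of "p^J"]
    apply (intro exI[of _ "\<lambda>x. \<psi> (x + x ^ p ^ J)"] exI[of _ w])
    apply (intro conjI)
    apply simp
    apply blast
    apply simp
    apply (simp add: algebra_simps)
    done
qed

end


lemma sum_pconst: "(\<Sum>x\<in>A. [:f x:]) = [:(\<Sum>x\<in>A. f x):]"
  by (induction A rule: infinite_finite_induct) simp_all

lemma char_orth:
  fixes \<psi> :: "'a::{field,finite} \<Rightarrow> complex"
  assumes g: "goodchar UNIV \<psi>"
  shows "(\<Sum>b\<in>UNIV. \<psi> (b * w)) = (if w = 0 then of_nat CARD('a) else 0)"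
proof (cases "w = 0")
  case True thus ?thesis using g unfolding goodchar_def by simp
next
  case False
  have "(\<Sum>b\<in>UNIV. \<psi> (b * w)) = (\<Sum>b\<in>UNIV. \<psi> b)"
    by (rule sum.reindex_bij_witness[of _ "\<lambda>c. c / w" "\<lambda>c. c * w"]) (use False in auto)
  thus ?thesis using g False unfolding goodchar_def by simp
qed

lemma cayley_charpoly:
  fixes \<psi> :: "'a::{finite,field} \<Rightarrow> complex" and C :: "'a set"
  assumes g: "goodchar UNIV \<psi>"
  shows "char_poly_mat ((\<chi> u v. if v - u \<in> C then 1 else 0) :: ((complex, 'a) vec, 'a) vec)
         = (\<Prod>b\<in>UNIV. [:- (\<Sum>d\<in>C. \<psi> (b * d)), 1:])"
proof -
  define A where "A = ((\<chi> u v. if v - u \<in> C then 1 else 0) :: ((complex, 'a) vec, 'a) vec)"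
  define lam where "lam b = (\<Sum>d\<in>C. \<psi> (b * d))" for b
  define Mp where "Mp = ((\<chi> v b. [:\<psi> (b * v):]) :: ((complex poly, 'a) vec, 'a) vec)"
  define Mp' where "Mp' = ((\<chi> b v. [:\<psi> (- (b * v)):]) :: ((complex poly, 'a) vec, 'a) vec)"
  define XA where "XA = ((\<chi> i. \<chi> j. (if i = j then [:0, 1:] else 0) - [:A $ i $ j:]) :: ((complex poly, 'a) vec, 'a) vec)"
  define XD where "XD = ((\<chi> i j. if i = j then [:- lam i, 1:] else 0) :: ((complex poly, 'a) vec, 'a) vec)"
  have ac: "\<psi> (x + y) = \<psi> x * \<psi> y" for x y using g unfolding goodchar_def addchar_def by simp
  have rowsum: "(\<Sum>v\<in>UNIV. A $ u $ v * \<psi> (b * v)) = \<psi> (b * u) * lam b" for u b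
  proof -
    have "(\<Sum>v\<in>UNIV. A $ u $ v * \<psi> (b * v)) = (\<Sum>v\<in>UNIV. if v - u \<in> C then \<psi> (b * v) else 0)"
      unfolding A_def by (intro sum.cong refl) simp
    also have "\<dots> = (\<Sum>v\<in>{v. v - u \<in> C}. \<psi> (b * v))" by (simp add: sum.If_cases)
    also have "\<dots> = (\<Sum>d\<in>C. \<psi> (b * (u + d)))"
      by (rule sum.reindex_bij_witness[of _ "\<lambda>d. u + d" "\<lambda>v. v - u"]) auto
    also have "\<dots> = (\<Sum>d\<in>C. \<psi> (b * u) * \<psi> (b * d))" by (simp add: distrib_left ac)
    finally show ?thesis unfolding lam_def by (simp add: sum_distrib_left)
  qed
  have c1: "XA ** Mp = Mp ** XD"
  proof -
    have "(XA ** Mp) $ u $ b = (Mp ** XD) $ u $ b" for u b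
    proof -
      have "(XA ** Mp) $ u $ b = (\<Sum>v\<in>UNIV. ((if u = v then [:0, 1:] else 0) - [:A $ u $ v:]) * [:\<psi> (b * v):])"
        unfolding matrix_matrix_mult_def XA_def Mp_def by simp
      also have "\<dots> = (\<Sum>v\<in>UNIV. (if u = v then [:0, 1:] * [:\<psi> (b * v):] else 0)) - (\<Sum>v\<in>UNIV. [:A $ u $ v * \<psi> (b * v):])"
      proof -
        have pt: "((if u = v then [:0, 1:] else 0) - [:A $ u $ v:]) * [:\<psi> (b * v):]
          = (if u = v then [:0, 1:] * [:\<psi> (b * v):] else 0) - [:A $ u $ v * \<psi> (b * v):]" for v
          by (cases "u = v") (simp_all add: left_diff_distrib)
        show ?thesis unfolding pt by (rule sum_subtractf)
      qed
      also have "\<dots> = [:0, 1:] * [:\<psi> (b * u):] - [:\<psi> (b * u) * lam b:]"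
        by (simp add: sum_pconst rowsum)
      also have "\<dots> = [:\<psi> (b * u):] * [:- lam b, 1:]" by simp
      also have "\<dots> = (Mp ** XD) $ u $ b"
        unfolding matrix_matrix_mult_def XD_def Mp_def by (simp add: if_distrib cong: if_cong)
      finally show ?thesis .
    qed
    thus ?thesis by (simp add: vec_eq_iff)
  qed
  have c2: "Mp ** Mp' = (\<chi> i j. if i = j then [:of_nat CARD('a):] else 0)"
  proof -
    have "(Mp ** Mp') $ u $ v = (if u = v then [:of_nat CARD('a):] else 0)" for u v
    proof -
      have "(Mp ** Mp') $ u $ v = (\<Sum>b\<in>UNIV. [:\<psi> (b * u) * \<psi> (- (b * v)):])"
        unfolding matrix_matrix_mult_def Mp_def Mp'_def by (simp add: mult.commute)
      also have "\<dots> = [:\<Sum>b\<in>UNIV. \<psi> (b * (u - v)):]"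
        by (simp add: sum_pconst ac[symmetric] right_diff_distrib)
      also have "\<dots> = (if u = v then [:of_nat CARD('a):] else 0)" using char_orth[OF g] by simp
      finally show ?thesis .
    qed
    thus ?thesis by (simp add: vec_eq_iff)
  qed
  have "det (Mp ** Mp') = (\<Prod>i\<in>(UNIV::'a set). [:of_nat CARD('a):])"
    unfolding c2 by (subst det_diagonal) simp_all
  hence "det Mp * det Mp' \<noteq> 0" by (simp add: det_mul)
  hence dM: "det Mp \<noteq> 0" by auto
  have "det XA * det Mp = det Mp * det XD" using c1 by (metis det_mul)
  hence "det XA = det XD" using dM by (simp add: mult.commute)
  also have "det XD = (\<Prod>b\<in>UNIV. [:- lam b, 1:])" unfolding XD_def by (subst det_diagonal) simp_all
  finally show ?thesis unfolding char_poly_mat_def XA_def A_def lam_def by simp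
qed

lemma cayley_spectrum:
  fixes \<psi> :: "'a::{finite,field} \<Rightarrow> complex" and C :: "'a set"
  assumes g: "goodchar UNIV \<psi>"
  shows "adj_spectrum ((\<chi> u v. if v - u \<in> C then 1 else 0) :: ((complex, 'a) vec, 'a) vec)
         = (\<Sum>b\<in>UNIV. {# \<Sum>d\<in>C. \<psi> (b * d) #})"
  unfolding adj_spectrum_def cayley_charpoly[OF g]
  by (subst proots_prod) simp_all

lemma sum_mset_const:
  assumes "finite A" "\<And>b. b \<in> A \<Longrightarrow> f b = c"
  shows "(\<Sum>b\<in>A. {# f b #}) = replicate_mset (card A) c"
  using assms by (induction A rule: finite_induct) auto


lemma sp_facts:
  fixes p m k :: nat
  assumes p: "prime p" and m: "m > 0" "even m" and sp: "semiprimitive_pair p m k"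
  shows "\<exists>j e. j > 0 \<and> k dvd p^j + 1 \<and> m = j * 2^(e+1)
           \<and> sp_sigma p m k = (if e = 0 then 1 else -1)"
proof -
  have m2: "m div 2 > 0" using m by (cases "m = 1") (auto elim: oddE)
  obtain t0 where t0: "t0 > 0" "k dvd p^t0 + 1" "t0 dvd m div 2" "sp_t p k = t0"
  proof (cases "k = 2")
    case True
    hence "p ^ m mod 4 = 1" using sp unfolding semiprimitive_pair_def by auto
    hence "odd (p ^ m)" by (metis dvd_mod_iff even_numeral odd_one)
    hence op: "odd p" using m(1) by simp
    have "sp_t p k = 1" unfolding sp_t_def
      by (rule Least_equality) (use True op in auto)
    moreover have "k dvd p ^ 1 + 1" using True op by simp
    ultimately show ?thesis using that[of 1] by simp
  next
    case False
    hence k2: "k > 2" and ex: "\<exists>t. t dvd m div 2 \<and> k dvd p ^ t + 1"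
      using sp unfolding semiprimitive_pair_def by auto
    then obtain t where t: "t dvd m div 2" "k dvd p ^ t + 1" by blast
    have "t > 0" using t(1) m2 by (cases "t = 0") auto
    note L = least_dvd[OF k2 this t(2)]
    show ?thesis
      using that[of "sp_t p k"] L dvd_trans[OF L(1) t(1)] unfolding sp_t_def by blast
  qed
  obtain c where c: "m div 2 = t0 * c" using t0(3) by blast
  have mc: "m = 2 * t0 * c" using c m(2) by (metis dvd_mult_div_cancel mult.assoc)
  have sdef: "m div (2 * t0) = c" using mc t0(1) by simp
  have cpos: "c > 0" using mc m(1) by (cases c) auto
  obtain e s' where es: "c = 2 ^ e * s'" "odd s'" using odd_even_decomp[OF cpos] by blast
  define j where "j = t0 * s'"
  have jpos: "j > 0" unfolding j_def using t0(1) es(2) by (cases s') auto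
  have "p ^ t0 + 1 dvd (p ^ t0) ^ s' + 1" by (rule odd_pow_dvd[OF es(2)])
  hence kj: "k dvd p ^ j + 1" unfolding j_def using t0(2) by (metis dvd_trans power_mult)
  have mj: "m = j * 2^(e+1)" unfolding j_def using mc es(1) by simp
  have "sp_sigma p m k = (-1) ^ (c + 1)" unfolding sp_sigma_def t0(4) sdef ..
  also have "\<dots> = (if e = 0 then 1 else -1)"
  proof (cases "e = 0")
    case True thus ?thesis using es by simp
  next
    case False
    hence "even c" using es(1) by simp
    thus ?thesis using False by simp
  qed
  finally show ?thesis using jpos kj mj by blast
qed


lemma sum_mset_split:
  fixes g :: "'a::{finite,zero} \<Rightarrow> 'b"
  assumes "UNIV = insert 0 (W \<union> V)" "0 \<notin> W \<union> V" "W \<inter> V = {}"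
  shows "(\<Sum>b\<in>UNIV. {# g b #}) = {# g 0 #} + (\<Sum>b\<in>W. {# g b #}) + (\<Sum>b\<in>V. {# g b #})"
proof -
  have "(\<Sum>b\<in>UNIV. {# g b #}) = {# g 0 #} + (\<Sum>b\<in>W \<union> V. {# g b #})"
    unfolding assms(1) using assms(2) by (simp add: sum.insert)
  also have "(\<Sum>b\<in>W \<union> V. {# g b #}) = (\<Sum>b\<in>W. {# g b #}) + (\<Sum>b\<in>V. {# g b #})"
    using assms(3) by (simp add: sum.union_disjoint)
  finally show ?thesis by (simp add: add.assoc)
qed

theorem theorem3p3:
  fixes p m k :: nat
  assumes "prime p" and "CARD('a::{field,finite}) = p ^ m"
    and "even m"
    and "semiprimitive_pair p m k"
  defines "n \<equiv> (p ^ m - 1) div k"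
    and "lam1 \<equiv> (of_int (sp_sigma p m k) * (of_nat k - 1) * of_nat p ^ (m div 2) - 1) / of_nat k :: complex"
    and "lam2 \<equiv> - (of_int (sp_sigma p m k) * of_nat p ^ (m div 2) + 1) / of_nat k :: complex"
  shows "adj_spectrum (paley_adj k :: ((complex, 'a) vec, 'a) vec)
           = {# of_nat n #} + replicate_mset n lam1 + replicate_mset ((k - 1) * n) lam2
         \<and> adj_spectrum (paley_comp_adj k :: ((complex, 'a) vec, 'a) vec)
           = {# of_nat ((k - 1) * n) #} + replicate_mset n ((of_nat k - 1) * lam2)
             + replicate_mset ((k - 1) * n) (- 1 - lam2)
         \<and> of_nat n \<noteq> lam1 \<and> of_nat n \<noteq> lam2 \<and> lam1 \<noteq> lam2"
proof -
  interpret F: ffield p m "TYPE('a)" by unfold_locales (use assms(1,2) in auto)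
  have mpos: "m > 0" by (rule F.m_pos)
  obtain j e where je: "j > 0" "k dvd p^j + 1" "m = j * 2^(e+1)" "sp_sigma p m k = (if e = 0 then 1 else -1)"
    using sp_facts[OF assms(1) mpos assms(3,4)] by blast
  have kq: "k dvd p^m - 1" using assms(4) unfolding semiprimitive_pair_def by blast
  have k2: "k \<ge> 2" using assms(4) unfolding semiprimitive_pair_def by auto
  define \<omega> where "\<omega> = p ^ (m div 2)"
  have m2: "m div 2 > 0" using mpos assms(3) by (cases "m = 1") (auto elim: oddE)
  have w2: "\<omega> \<ge> 2" unfolding \<omega>_def using F.Qge2[OF m2] .
  have qw: "p ^ m = \<omega>^2" unfolding \<omega>_def using assms(3) by (simp add: power_mult[symmetric])
  have kne: "k \<noteq> \<omega> + 1"
  proof (cases "k = 2")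
    case True thus ?thesis using w2 by simp
  next
    case False thus ?thesis using assms(4) unfolding semiprimitive_pair_def \<omega>_def by auto
  qed
  have kn: "k * n = p ^ m - 1" unfolding n_def using kq by simp
  obtain \<psi> w where T: "goodchar (F.E (p^(j*2^(e+1)))) \<psi>" "w \<in> F.E (p^(j*2^(e+1)))" "w \<noteq> 0"
    "\<forall>a. a \<in> F.E (p^(j*2^(e+1))) \<longrightarrow> a \<noteq> 0 \<longrightarrow> F.eta \<psi> (F.S k (p^(j*2^(e+1)))) a
        = (-1 - F.Dv j e) / of_nat k + (if a / w \<in> F.S k (p^(j*2^(e+1))) then F.Dv j e else 0)"
    using F.tower[OF je(1) _ je(2), of e] k2 je(3) by auto
  have EU: "F.E (p^(j*2^(e+1))) = UNIV" unfolding je(3)[symmetric] F.E_def using F.pow_q by auto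
  define R where "R = (kth_powers k :: 'a set)"
  have SR: "F.S k (p^(j*2^(e+1))) = R"
    unfolding je(3)[symmetric] F.S_def R_def using F.kth_powers_eq(1)[OF kq] by simp
  have cR: "card R = n" using F.kth_powers_eq(2)[OF kq] unfolding n_def R_def .
  have R0: "0 \<notin> R" unfolding R_def kth_powers_def by auto
  define \<sigma> where "\<sigma> = (of_int (sp_sigma p m k) :: complex)"
  have jw: "j * 2 ^ e = m div 2" using je(3) by simp
  have Dv: "F.Dv j e = \<sigma> * of_nat \<omega>" unfolding F.Dv_def \<sigma>_def je(4) jw \<omega>_def by simp
  have g: "goodchar UNIV \<psi>" using T(1) EU by simp
  have per: "(\<Sum>d\<in>R. \<psi> (a * d)) = (-1 - \<sigma> * of_nat \<omega>) / of_nat k + (if a / w \<in> R then \<sigma> * of_nat \<omega> else 0)"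
    if "a \<noteq> 0" for a
    using T(4) EU SR that unfolding F.eta_def Dv by auto
  have per0: "(\<Sum>d\<in>R. \<psi> (0 * d)) = of_nat n" using g cR unfolding goodchar_def by simp
  have k0: "(of_nat k :: complex) \<noteq> 0" using k2 by simp
  have l1: "lam1 = (-1 - \<sigma> * of_nat \<omega>) / of_nat k + \<sigma> * of_nat \<omega>"
    unfolding lam1_def \<sigma>_def \<omega>_def using k0 by (simp add: field_simps)
  have l2: "lam2 = (-1 - \<sigma> * of_nat \<omega>) / of_nat k"
    unfolding lam2_def \<sigma>_def \<omega>_def using k0 by (simp add: field_simps)
  define W where "W = {b::'a. b \<noteq> 0 \<and> b / w \<in> R}"
  define V where "V = {b::'a. b \<noteq> 0 \<and> b / w \<notin> R}"
  have U: "UNIV = insert 0 (W \<union> V)" by (auto simp: W_def V_def)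
  have disj: "0 \<notin> W \<union> V" "W \<inter> V = {}" by (auto simp: W_def V_def)
  have cW: "card W = n"
  proof -
    have "W = (\<lambda>x. w * x) ` R"
    proof
      show "W \<subseteq> (\<lambda>x. w * x) ` R"
      proof
        fix b assume "b \<in> W"
        hence "b / w \<in> R" "b = w * (b / w)" using T(3) unfolding W_def by auto
        thus "b \<in> (\<lambda>x. w * x) ` R" by blast
      qed
      show "(\<lambda>x. w * x) ` R \<subseteq> W" using T(3) R0 unfolding W_def by auto
    qed
    moreover have "inj_on (\<lambda>x. w * x) R" using T(3) by (auto simp: inj_on_def)
    ultimately show ?thesis using cR card_image by metis
  qed
  have cV: "card V = (k - 1) * n"
  proof -
    have "card (UNIV :: 'a set) = Suc (card (W \<union> V))" unfolding U using disj(1) by simp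
    also have "card (W \<union> V) = n + card V" using disj(2) cW by (simp add: card_Un_disjoint)
    finally have "p ^ m = Suc (n + card V)" using assms(2) by simp
    hence "k * n = n + card V" using kn by simp
    hence "card V = k * n - n" by simp
    thus ?thesis by (simp add: diff_mult_distrib)
  qed
  have A1: "paley_adj k = ((\<chi> u v. if v - u \<in> R then 1 else 0) :: ((complex, 'a) vec, 'a) vec)"
    unfolding paley_adj_def R_def ..
  have spec1: "adj_spectrum (paley_adj k :: ((complex, 'a) vec, 'a) vec)
           = {# of_nat n #} + replicate_mset n lam1 + replicate_mset ((k - 1) * n) lam2"
  proof -
    have "adj_spectrum (paley_adj k :: ((complex, 'a) vec, 'a) vec) = (\<Sum>b\<in>UNIV. {# \<Sum>d\<in>R. \<psi> (b * d) #})"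
      unfolding A1 by (rule cayley_spectrum[OF g])
    also have "\<dots> = {# \<Sum>d\<in>R. \<psi> (0 * d) #} + (\<Sum>b\<in>W. {# \<Sum>d\<in>R. \<psi> (b * d) #})
        + (\<Sum>b\<in>V. {# \<Sum>d\<in>R. \<psi> (b * d) #})" by (rule sum_mset_split[OF U disj])
    also have "(\<Sum>b\<in>W. {# \<Sum>d\<in>R. \<psi> (b * d) #}) = replicate_mset (card W) lam1"
      by (rule sum_mset_const) (auto simp: W_def per l1)
    also have "(\<Sum>b\<in>V. {# \<Sum>d\<in>R. \<psi> (b * d) #}) = replicate_mset (card V) lam2"
      by (rule sum_mset_const) (auto simp: V_def per l2)
    finally show ?thesis using per0 cW cV by simp
  qed
  define C' where "C' = {d::'a. d \<noteq> 0 \<and> d \<notin> R}"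
  have A2: "paley_comp_adj k = ((\<chi> u v. if v - u \<in> C' then 1 else 0) :: ((complex, 'a) vec, 'a) vec)"
    unfolding paley_comp_adj_def C'_def R_def by simp
  have C'eq: "C' = (UNIV - {0}) - R" unfolding C'_def by auto
  have lamC: "(\<Sum>d\<in>C'. \<psi> (b * d)) = (if b = 0 then of_nat (p^m) - 1 else -1) - (\<Sum>d\<in>R. \<psi> (b * d))" for b
  proof -
    have "(\<Sum>d\<in>C'. \<psi> (b * d)) = (\<Sum>d\<in>UNIV - {0}. \<psi> (b * d)) - (\<Sum>d\<in>R. \<psi> (b * d))"
      unfolding C'eq using R0 by (subst sum_diff) auto
    moreover have "(\<Sum>d\<in>UNIV - {0}. \<psi> (b * d)) = (\<Sum>d\<in>UNIV. \<psi> (b * d)) - \<psi> 0"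
      by (simp add: sum_diff1)
    moreover have "(\<Sum>d\<in>UNIV. \<psi> (b * d)) = (if b = 0 then of_nat (p^m) else 0)"
      using char_orth[OF g, of b] assms(2) by (simp add: mult.commute)
    moreover have "\<psi> 0 = 1" using g unfolding goodchar_def by simp
    ultimately show ?thesis by simp
  qed
  have spec2: "adj_spectrum (paley_comp_adj k :: ((complex, 'a) vec, 'a) vec)
           = {# of_nat ((k - 1) * n) #} + replicate_mset n ((of_nat k - 1) * lam2)
             + replicate_mset ((k - 1) * n) (- 1 - lam2)"
  proof -
    have v0: "(\<Sum>d\<in>C'. \<psi> (0 * d)) = of_nat ((k - 1) * n)"
    proof -
      have "(\<Sum>d\<in>C'. \<psi> (0 * d)) = of_nat (p^m) - 1 - of_nat n" using lamC[of 0] per0 by simp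
      moreover have "p ^ m = Suc ((k - 1) * n + n)"
      proof -
        have "(k - 1) * n + n = k * n" using k2 by (cases k) simp_all
        moreover have "p ^ m = Suc (k * n)" using kn F.q_gt1 by simp
        ultimately show ?thesis by simp
      qed
      ultimately show ?thesis by simp
    qed
    have "adj_spectrum (paley_comp_adj k :: ((complex, 'a) vec, 'a) vec) = (\<Sum>b\<in>UNIV. {# \<Sum>d\<in>C'. \<psi> (b * d) #})"
      unfolding A2 by (rule cayley_spectrum[OF g])
    also have "\<dots> = {# \<Sum>d\<in>C'. \<psi> (0 * d) #} + (\<Sum>b\<in>W. {# \<Sum>d\<in>C'. \<psi> (b * d) #})
        + (\<Sum>b\<in>V. {# \<Sum>d\<in>C'. \<psi> (b * d) #})" by (rule sum_mset_split[OF U disj])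
    also have "(\<Sum>b\<in>W. {# \<Sum>d\<in>C'. \<psi> (b * d) #}) = replicate_mset (card W) ((of_nat k - 1) * lam2)"
    proof (rule sum_mset_const)
      fix b assume "b \<in> W"
      hence "b \<noteq> 0" "b / w \<in> R" unfolding W_def by auto
      hence "(\<Sum>d\<in>C'. \<psi> (b * d)) = -1 - lam1" using lamC[of b] per[of b] l1 by simp
      also have "\<dots> = (of_nat k - 1) * lam2" unfolding l1 l2 using k0 by (simp add: field_simps)
      finally show "(\<Sum>d\<in>C'. \<psi> (b * d)) = (of_nat k - 1) * lam2" .
    qed simp
    also have "(\<Sum>b\<in>V. {# \<Sum>d\<in>C'. \<psi> (b * d) #}) = replicate_mset (card V) (- 1 - lam2)"
    proof (rule sum_mset_const)
      fix b assume "b \<in> V"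
      hence "b \<noteq> 0" "b / w \<notin> R" unfolding V_def by auto
      thus "(\<Sum>d\<in>C'. \<psi> (b * d)) = - 1 - lam2" using lamC[of b] per[of b] l2 by simp
    qed simp
    finally show ?thesis using v0 cW cV by simp
  qed
  have knc: "of_nat k * of_nat n = (of_nat \<omega>)^2 - (1::complex)"
  proof -
    have "k * n + 1 = \<omega>^2" using kn qw F.q_gt1 by simp
    hence "of_nat (k * n) + 1 = (of_nat (\<omega>^2) :: complex)" by (metis of_nat_1 of_nat_add)
    thus ?thesis by (simp add: algebra_simps)
  qed
  have sig: "\<sigma> = 1 \<or> \<sigma> = -1" unfolding \<sigma>_def je(4) by simp
  have w0: "(of_nat \<omega> :: complex) \<noteq> 0" using w2 by simp
  have d1: "of_nat n \<noteq> lam1"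
  proof
    assume h: "of_nat n = lam1"
    hence "of_nat k * of_nat n = \<sigma> * of_nat \<omega> * (of_nat k - 1) - 1" unfolding l1 using k0 by (simp add: field_simps)
    hence "(of_nat \<omega>)^2 = \<sigma> * of_nat \<omega> * (of_nat k - 1)" using knc by simp
    hence "of_nat \<omega> = \<sigma> * (of_nat k - 1)" using w0 by (simp add: power2_eq_square)
    thus False
    proof (cases "\<sigma> = 1")
      case True
      with \<open>of_nat \<omega> = \<sigma> * (of_nat k - 1)\<close> have "(of_nat (\<omega> + 1) :: complex) = of_nat k" by simp
      hence "\<omega> + 1 = k" by (simp only: of_nat_eq_iff)
      thus False using kne by simp
    next
      case False
      hence "\<sigma> = -1" using sig by simp
      with \<open>of_nat \<omega> = \<sigma> * (of_nat k - 1)\<close> have "(of_nat (\<omega> + k) :: complex) = of_nat 1" by simp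
      hence "\<omega> + k = 1" by (simp only: of_nat_eq_iff)
      thus False using k2 by simp
    qed
  qed
  have d2: "of_nat n \<noteq> lam2"
  proof
    assume h: "of_nat n = lam2"
    hence "of_nat n * of_nat k = -1 - \<sigma> * of_nat \<omega>" unfolding l2 using k0 by (simp add: eq_divide_eq)
    hence "of_nat k * of_nat n = - \<sigma> * of_nat \<omega> - 1" by (simp add: mult.commute)
    hence "(of_nat \<omega>)^2 = - \<sigma> * of_nat \<omega>" using knc by simp
    hence "of_nat \<omega> * of_nat \<omega> = (- \<sigma>) * of_nat \<omega>" by (simp add: power2_eq_square)
    hence "of_nat \<omega> = - \<sigma>" using w0 by (metis mult_cancel_right)
    thus False
    proof (cases "\<sigma> = 1")
      case True
      with \<open>of_nat \<omega> = - \<sigma>\<close> have "(of_nat (\<omega> + 1) :: complex) = of_nat 0" by simp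
      hence "\<omega> + 1 = 0" by (simp only: of_nat_eq_iff)
      thus False by simp
    next
      case False
      hence "\<sigma> = -1" using sig by simp
      with \<open>of_nat \<omega> = - \<sigma>\<close> have "(of_nat \<omega> :: complex) = of_nat 1" by simp
      hence "\<omega> = 1" by (simp only: of_nat_eq_iff)
      thus False using w2 by simp
    qed
  qed
  have d3: "lam1 \<noteq> lam2"
  proof
    assume "lam1 = lam2"
    hence "\<sigma> * of_nat \<omega> = 0" unfolding l1 l2 by simp
    thus False using sig w0 by auto
  qed
  show ?thesis using spec1 spec2 d1 d2 d3 by blast
qed

end
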